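(* Consider the two-tier network model described in the context, with typical user at the origin. Then the probabilities that the typical user is associated with a macro BS via a LoS link, with a macro BS via a NLoS link, with a small cell BS via a LoS link, and with a small cell BS via a NLoS link are, respectively, \begin{align*} \mathcal{A}_{m}^{L} := \mathbb{P}[E_{m}^{L}] &= 2\pi\lambda_{m}\int_0^\infty r\,\mathbb{P}_{m}^{L}(r)\,\zeta_1\!\left(r,\,k_1 r^{\alpha^{L}/\alpha^{NL}}\right)\zeta_2\!\left(k_2 r,\,k_1k_3 r^{\alpha^{L}/\alpha^{NL}}\right)dr,\\ \mathcal{A}_{m}^{NL} := \mathbb{P}[E_{m}^{NL}] &= 2\pi\lambda_{m}\int_0^\infty r\,(1-\mathbb{P}_{m}^{L}(r))\,\zeta_1\!\left(k_4 r^{\alpha^{NL}/\alpha^{L}},\,r\right)\zeta_2\!\left(k_2k_4 r^{\alpha^{NL}/\alpha^{L}},\,k_3 r\right)dr,\\ \mathcal{A}_{s}^{L} := \mathbb{P}[E_{s}^{L}] &= 2\pi\lambda_{s}\int_0^\infty r\,\mathbb{P}_{s}^{L}(r)\,\zeta_1\!\left(r/k_2,\,(k_1/k_3) r^{\alpha^{L}/\alpha^{NL}}\right)\zeta_2\!\left(r,\,k_1 r^{\alpha^{L}/\alpha^{NL}}\right)dr,\\ \mathcal{A}_{s}^{NL} := \mathbb{P}[E_{s}^{NL}] &= 2\pi\lambda_{s}\int_0^\infty r\,(1-\mathbb{P}_{s}^{L}(r))\,\zeta_1\!\left((k_4/k_2) r^{\alpha^{NL}/\alpha^{L}},\,r/k_3\right)\zeta_2\!\left(k_4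 r^{\alpha^{NL}/\alpha^{L}},\,r\right)dr, \end{align*} where \[ \zeta_1(x_1,x_2) := \exp\!\left(-\int_0^{x_1}\lambda_{m}\mathbb{P}_{m}^{L}(u)\,2\pi u\,du-\int_0^{x_2}\lambda_{m}(1-\mathbb{P}_{m}^{L}(u))\,2\pi u\,du\right), \] \[ \zeta_2(x_1,x_2) := \exp\!\left(-\int_0^{x_1}\lambda_{s}\mathbb{P}_{s}^{L}(u)\,2\pi u\,du-\int_0^{x_2}\lambda_{s}(1-\mathbb{P}_{s}^{L}(u))\,2\pi u\,du\right), \] and $k_1 := (L^{NL}/L^{L})^{1/\alpha^{NL}}$, $k_2 := (BP_{s}/P_{m})^{1/\alpha^{L}}$, $k_3 := (BP_{s}/P_{m})^{1/\alpha^{NL}}$, $k_4 := (L^{L}/L^{NL})^{1/\alpha^{L}}$.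
   Context: Macro base stations (MBSs) are located according to a homogeneous Poisson point process (PPP) $\Phi_{m}$ in $\mathbb{R}^2$ of density $\lambda_{m}>0$, and small cell base stations (SCBs) according to an independent homogeneous PPP $\Phi_{s}$ of density $\lambda_{s}>0$. A typical user is located at the origin. Given functions $\mathbb{P}_{m}^{L},\mathbb{P}_{s}^{L}:[0,\infty)\to[0,1]$, each MBS at distance $r$ from the origin independently (of everything else) has a line-of-sight (LoS) link to the typical user with probability $\mathbb{P}_{m}^{L}(r)$ and a non-line-of-sight (NLoS) link otherwise; each SCB at distance $r$ independently has a LoS link with probability $\mathbb{P}_{s}^{L}(r)$ and NLoS otherwise. Constants: transmit powers $P_{m},P_{s}>0$, bias factor $B>0$, path loss constants $L^{L},L^{NL}>0$ and exponents $\alpha^{L},\alpha^{NL}>0$. The average biased received power at the typical user from an MBS at distance $r$ is $P_{m}L^{L}r^{-\alpha^{L}}$ if its link is LoS and $P_{m}L^{NL}r^{-\alpha^{NL}}$ if NLoS; from an SCB at distance $r$ it is $BP_{s}L^{L}r^{-\alpha^{L}}$ if LoS and $BP_{s}L^{NL}r^{-\alpha^{NL}}$ if NLoS. The typical user associates with the BS (among all MBSs and SCBs) providing the largest average biased received power. $E_{m}^{L}$ (resp. $E_{m}^{NL}$, $E_{s}^{L}$, $E_{s}^{NL}$) denotes the event that this serving BS is an MBS with a LoS link (resp. an MBS with a NLoS link, an SCB with a LoS link, an SCB with a NLoS link). *)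

theory Defs
  imports "HOL-Probability.Probability"
begin

type_synonym pt = "real^2"

text \<open>Points of a marked process are pairs (location, LoS flag); True = LoS.\<close>

definition cnt :: "('a \<Rightarrow> (pt \<times> bool) set) \<Rightarrow> (pt \<times> bool) set \<Rightarrow> 'a \<Rightarrow> nat" where
  "cnt \<Psi> A \<omega> = card (\<Psi> \<omega> \<inter> A)"

definition mark_space :: "(pt \<times> bool) measure" where
  "mark_space = lborel \<Otimes>\<^sub>M count_space UNIV"

text \<open>Intensity measure of a homogeneous PPP of density lam on the plane whose
  points are independently marked LoS with probability pL(distance to origin):
  lam * Lebesgue (x) Bernoulli(pL(norm x)).\<close>
definition marked_intensity :: "real \<Rightarrow> (real \<Rightarrow> real) \<Rightarrow> (pt \<times> bool) measure" where
  "marked_intensity lam pL =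
     density mark_space (\<lambda>(x, b). ennreal (lam * (if b then pL (norm x) else 1 - pL (norm x))))"

definition locally_finite :: "(pt \<times> bool) set \<Rightarrow> bool" where
  "locally_finite S \<longleftrightarrow> (\<forall>R::real. finite {z \<in> S. norm (fst z) \<le> R})"

text \<open>Two independent independently-marked homogeneous PPPs (macro tier Psi_m, small-cell
  tier Psi_s): counts in pairwise disjoint sets of finite intensity, taken over both
  tiers jointly, are mutually independent and Poisson distributed with the intensity
  measure as mean.\<close>
definition two_tier_marked_ppp ::
  "'a measure \<Rightarrow> ('a \<Rightarrow> (pt \<times> bool) set) \<Rightarrow> (pt \<times> bool) measure
     \<Rightarrow> ('a \<Rightarrow> (pt \<times> bool) set) \<Rightarrow> (pt \<times> bool) measure \<Rightarrow> bool" where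
  "two_tier_marked_ppp M \<Psi>m \<mu>m \<Psi>s \<mu>s \<longleftrightarrow>
     prob_space M \<and>
     (\<forall>\<omega>\<in>space M. locally_finite (\<Psi>m \<omega>) \<and> locally_finite (\<Psi>s \<omega>)) \<and>
     (\<forall>(n::nat) (k::nat) A B.
        disjoint_family_on A {..<n} \<and> disjoint_family_on B {..<k} \<and>
        (\<forall>i<n. A i \<in> sets mark_space \<and> emeasure \<mu>m (A i) < \<infinity>) \<and>
        (\<forall>j<k. B j \<in> sets mark_space \<and> emeasure \<mu>s (B j) < \<infinity>) \<longrightarrow>
          prob_space.indep_vars M (\<lambda>_. count_space (UNIV :: nat set))
            (\<lambda>i. case i of Inl j \<Rightarrow> cnt \<Psi>m (A j) | Inr j \<Rightarrow> cnt \<Psi>s (B j))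
            (Inl ` {..<n} \<union> Inr ` {..<k}) \<and>
          (\<forall>i<n. \<forall>c::nat. measure M {\<omega> \<in> space M. cnt \<Psi>m (A i) \<omega> = c} =
               measure \<mu>m (A i) ^ c / fact c * exp (- measure \<mu>m (A i))) \<and>
          (\<forall>j<k. \<forall>c::nat. measure M {\<omega> \<in> space M. cnt \<Psi>s (B j) \<omega> = c} =
               measure \<mu>s (B j) ^ c / fact c * exp (- measure \<mu>s (B j))))"

text \<open>Average (biased) received power from a BS at location x with LoS flag b, with
  transmit power (times bias) Pw.\<close>
definition rx_power :: "real \<Rightarrow> real \<Rightarrow> real \<Rightarrow> real \<Rightarrow> real \<Rightarrow> pt \<times> bool \<Rightarrow> real" where
  "rx_power Pw LL LNL aL aNL z =
     (if snd z then Pw * LL * norm (fst z) powr (- aL) else Pw * LNL * norm (fst z) powr (- aNL))"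

definition serving_event ::
  "'a measure \<Rightarrow> ('a \<Rightarrow> (pt \<times> bool) set) \<Rightarrow> (pt \<times> bool \<Rightarrow> real)
     \<Rightarrow> ('a \<Rightarrow> (pt \<times> bool) set) \<Rightarrow> (pt \<times> bool \<Rightarrow> real) \<Rightarrow> bool \<Rightarrow> 'a set" where
  "serving_event M \<Psi>own pown \<Psi>oth poth b =
     {\<omega> \<in> space M. \<exists>x. (x, b) \<in> \<Psi>own \<omega> \<and>
        (\<forall>y \<in> \<Psi>own \<omega>. y \<noteq> (x, b) \<longrightarrow> pown y < pown (x, b)) \<and>
        (\<forall>y \<in> \<Psi>oth \<omega>. poth y < pown (x, b))}"

definition zeta :: "real \<Rightarrow> (real \<Rightarrow> real) \<Rightarrow> real \<Rightarrow> real \<Rightarrow> real" where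
  "zeta lam pL x1 x2 =
     exp (- (LINT u:{0..x1}|lborel. lam * pL u * (2 * pi * u))
          - (LINT u:{0..x2}|lborel. lam * (1 - pL u) * (2 * pi * u)))"

end

theory Submission
  imports Defs
begin



lemma distr_norm_eq:
  "distr (lborel::(real^2) measure) borel norm = density lborel (\<lambda>u. indicator {0..} u * ennreal (2*pi*u))"
proof (rule measure_eqI_generator_eq[where E="range (\<lambda>a. {..a::real})" and \<Omega>=UNIV and A="\<lambda>i. {..real i}"])
  show "Int_stable (range (\<lambda>a. {..a::real}))" by (auto simp: Int_stable_def)
  show "range (\<lambda>a. {..a::real}) \<subseteq> Pow UNIV" by auto
  show "sets (distr (lborel::(real^2) measure) borel norm) = sigma_sets UNIV (range (\<lambda>a. {..a::real}))"
    by (simp add: borel_eq_atMost)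
  show "sets (density lborel (\<lambda>u. indicator {0..} u * ennreal (2*pi*u))) = sigma_sets UNIV (range (\<lambda>a. {..a::real}))"
    by (simp add: borel_eq_atMost)
  show "range (\<lambda>i. {..real i}) \<subseteq> range (\<lambda>a. {..a::real})" by auto
  show "(\<Union>i. {..real i}) = UNIV" using real_arch_simple by auto
  have eq: "emeasure (distr (lborel::(real^2) measure) borel norm) {..a} =
        emeasure (density lborel (\<lambda>u. indicator {0..} u * ennreal (2*pi*u))) {..a}" for a :: real
  proof (cases "a < 0")
    case True
    have "norm -` {..a} = ({}::(real^2) set)" using True by auto (meson norm_ge_zero order.trans linorder_not_le)
    then have l: "emeasure (distr (lborel::(real^2) measure) borel norm) {..a} = 0"
      by (simp add: emeasure_distr)
    have "emeasure (density lborel (\<lambda>u. indicator {0..} u * ennreal (2*pi*u))) {..a} =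
       (\<integral>\<^sup>+u. indicator {..a} u * (indicator {0..} u * ennreal (2*pi*u)) \<partial>lborel)"
      by (simp add: emeasure_density nn_integral_set_ennreal mult.commute)
    also have "\<dots> = (\<integral>\<^sup>+u. 0 \<partial>lborel)"
      by (subst nn_integral_cong[where v="\<lambda>_. 0"]) (use True in \<open>auto simp: indicator_def\<close>)
    finally show ?thesis using l by simp
  next
    case False
    have "norm -` {..a} = (cball 0 a::(real^2) set)" by auto
    then have l: "emeasure (distr (lborel::(real^2) measure) borel norm) {..a} = ennreal (pi * a^2)"
      using False by (simp add: emeasure_distr emeasure_cball eval_unit_ball_vol)
    have hi: "((\<lambda>u. 2*pi*u) has_integral (pi * a^2)) {0..a}"
    proof -
      have "((\<lambda>u. 2*pi*u) has_integral (pi*a^2 - pi*0^2)) {0..a}"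
        apply (rule fundamental_theorem_of_calculus)
        using False by (auto intro!: derivative_eq_intros simp: power2_eq_square)
      then show ?thesis by simp
    qed
    have "emeasure (density lborel (\<lambda>u. indicator {0..} u * ennreal (2*pi*u))) {..a} =
       (\<integral>\<^sup>+u. indicator {..a} u * (indicator {0..} u * ennreal (2*pi*u)) \<partial>lborel)"
      by (simp add: emeasure_density nn_integral_set_ennreal mult.commute)
    also have "\<dots> = (\<integral>\<^sup>+u. ennreal (indicator {0..a} u * (2*pi*u)) \<partial>lborel)"
      by (rule nn_integral_cong) (auto simp: indicator_def)
    also have "\<dots> = ennreal (pi*a^2)"
    proof (rule nn_integral_has_integral_lborel)
      have e: "(\<lambda>u. indicator {0..a} u * (2*pi*u)) = (\<lambda>u. if u \<in> {0..a} then 2*pi*u else 0)"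
        by (auto simp: fun_eq_iff indicator_def)
      show "((\<lambda>u. indicator {0..a} u * (2*pi*u)) has_integral (pi*a^2)) UNIV"
        unfolding e has_integral_restrict_UNIV using hi .
    qed (auto simp: indicator_def)
    finally show ?thesis using l by simp
  qed
  show "\<And>X. X \<in> range (\<lambda>a. {..a::real}) \<Longrightarrow>
     emeasure (distr (lborel::(real^2) measure) borel norm) X =
     emeasure (density lborel (\<lambda>u. indicator {0..} u * ennreal (2*pi*u))) X"
    using eq by auto
  show "emeasure (distr (lborel::(real^2) measure) borel norm) {..real i} \<noteq> \<infinity>" for i
  proof -
    have "norm -` {..real i} = (cball 0 (real i)::(real^2) set)" by auto
    then show ?thesis by (simp add: emeasure_distr emeasure_cball eval_unit_ball_vol)
  qed
qed

lemma radial_nn: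
  fixes g :: "real \<Rightarrow> ennreal"
  assumes g: "g \<in> borel_measurable borel"
  shows "(\<integral>\<^sup>+x. g (norm x) \<partial>(lborel::(real^2) measure)) =
         (\<integral>\<^sup>+u. indicator {0..} u * ennreal (2*pi*u) * g u \<partial>lborel)"
proof -
  have "(\<integral>\<^sup>+x. g (norm x) \<partial>(lborel::(real^2) measure)) = (\<integral>\<^sup>+u. g u \<partial>distr (lborel::(real^2) measure) borel norm)"
    by (rule nn_integral_distr[symmetric]) (auto simp: g)
  also have "\<dots> = (\<integral>\<^sup>+u. g u \<partial>density lborel (\<lambda>u. indicator {0..} u * ennreal (2*pi*u)))"
    by (simp add: distr_norm_eq)
  also have "\<dots> = (\<integral>\<^sup>+u. indicator {0..} u * ennreal (2*pi*u) * g u \<partial>lborel)"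
    by (subst nn_integral_density) (auto simp: g)
  finally show ?thesis .
qed


definition R :: "bool \<Rightarrow> real \<Rightarrow> real \<Rightarrow> (pt \<times> bool) set" where
  "R \<beta> a c = {z. snd z = \<beta> \<and> a < norm (fst z) \<and> norm (fst z) \<le> c}"

lemma space_mark_space[simp]: "space mark_space = UNIV"
  by (simp add: mark_space_def space_pair_measure)

lemma sets_mark_space_Collect:
  assumes "Measurable.pred mark_space P" shows "{z. P z} \<in> sets mark_space"
  using assms unfolding pred_def by simp

lemma R_sets: "R \<beta> a c \<in> sets mark_space"
  unfolding R_def by (rule sets_mark_space_Collect) (simp add: mark_space_def, measurable)

lemma D_sets: "{z::pt\<times>bool. norm (fst z) \<le> c} \<in> sets mark_space"
  by (rule sets_mark_space_Collect) (simp add: mark_space_def, measurable)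


lemma sf_bool: "sigma_finite_measure (count_space (UNIV::bool set))"
  by (rule sigma_finite_measure_count_space_finite) simp

definition dens :: "real \<Rightarrow> (real \<Rightarrow> real) \<Rightarrow> pt \<times> bool \<Rightarrow> ennreal" where
  "dens lam q = (\<lambda>(x, b). ennreal (lam * (if b then q (norm x) else 1 - q (norm x))))"

lemma dens_meas: assumes q[measurable]: "q \<in> borel_measurable borel" shows "dens lam q \<in> borel_measurable mark_space"
  unfolding dens_def mark_space_def by measurable

lemma sum_bool: "(\<Sum>b\<in>UNIV. f b) = f True + (f False :: 'b::comm_monoid_add)"
  by (simp add: UNIV_bool add.commute)

lemma marked_emeasure:
  assumes q: "q \<in> borel_measurable borel" and A: "A \<in> sets mark_space"
  shows "emeasure (marked_intensity lam q) A =
    (\<integral>\<^sup>+x. dens lam q (x,True) * indicator A (x,True) + dens lam q (x,False) * indicator A (x,False) \<partial>lborel)"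
proof -
  have "marked_intensity lam q = density mark_space (dens lam q)"
    unfolding marked_intensity_def dens_def by simp
  then have "emeasure (marked_intensity lam q) A = (\<integral>\<^sup>+z. dens lam q z * indicator A z \<partial>mark_space)"
    using A dens_meas[OF q] by (simp add: emeasure_density)
  also have "\<dots> = (\<integral>\<^sup>+x. \<integral>\<^sup>+b. dens lam q (x,b) * indicator A (x,b) \<partial>count_space UNIV \<partial>lborel)"
    unfolding mark_space_def
    by (rule sigma_finite_measure.nn_integral_fst[OF sf_bool, symmetric])
       (use A dens_meas[OF q] in \<open>auto simp: mark_space_def\<close>)
  also have "\<dots> = (\<integral>\<^sup>+x. dens lam q (x,True) * indicator A (x,True) + dens lam q (x,False) * indicator A (x,False) \<partial>lborel)"
    by (rule nn_integral_cong) (subst nn_integral_count_space_finite, simp, rule sum_bool)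
  finally show ?thesis .
qed


definition wq :: "real \<Rightarrow> (real \<Rightarrow> real) \<Rightarrow> bool \<Rightarrow> real \<Rightarrow> real" where
  "wq lam q \<beta> u = (if \<beta> then lam * q u * (2 * pi * u) else lam * (1 - q u) * (2 * pi * u))"

definition W :: "real \<Rightarrow> (real \<Rightarrow> real) \<Rightarrow> bool \<Rightarrow> real \<Rightarrow> real" where
  "W lam q \<beta> x = (LINT u:{0..x}|lborel. wq lam q \<beta> u)"

lemma zeta_W: "zeta lam q x1 x2 = exp (- W lam q True x1 - W lam q False x2)"
  unfolding zeta_def W_def wq_def by simp

locale tier =
  fixes lam :: real and q :: "real \<Rightarrow> real"
  assumes lam: "0 \<le> lam" and qm[measurable]: "q \<in> borel_measurable borel"
    and qr: "\<And>r. 0 \<le> r \<Longrightarrow> 0 \<le> q r \<and> q r \<le> 1"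
begin

lemma wq_meas[measurable]: "wq lam q \<beta> \<in> borel_measurable borel"
  unfolding wq_def by measurable

lemma wq_nonneg: "0 \<le> u \<Longrightarrow> 0 \<le> wq lam q \<beta> u"
  using qr[of u] lam unfolding wq_def by (auto intro!: mult_nonneg_nonneg)

lemma wq_le: "0 \<le> u \<Longrightarrow> wq lam q \<beta> u \<le> lam * (2 * pi * u)"
proof -
  assume u: "0 \<le> u"
  have "0 \<le> 2*pi*u" using u by simp
  moreover have "(if \<beta> then q u else 1 - q u) \<le> 1" using qr[OF u] by auto
  ultimately have "(if \<beta> then q u else 1 - q u) * (2*pi*u) \<le> 1 * (2*pi*u)"
    by (intro mult_right_mono) auto
  then have "lam * ((if \<beta> then q u else 1 - q u) * (2*pi*u)) \<le> lam * (2*pi*u)"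
    using lam by (intro mult_left_mono) auto
  then show ?thesis unfolding wq_def by (auto simp: algebra_simps split: if_splits)
qed

lemma wq_set_integrable:
  assumes "0 \<le> a" shows "set_integrable lborel {a..c} (wq lam q \<beta>)"
  unfolding set_integrable_def
proof (rule integrableI_bounded_set_indicator[where B="lam * (2*pi*\<bar>c\<bar>)"])
  show "AE x in lborel. x \<in> {a..c} \<longrightarrow> norm (wq lam q \<beta> x) \<le> lam * (2 * pi * \<bar>c\<bar>)"
  proof (intro AE_I2 impI)
    fix x assume x: "x \<in> {a..c}"
    then have x0: "0 \<le> x" using assms by auto
    have "norm (wq lam q \<beta> x) = wq lam q \<beta> x" using wq_nonneg[OF x0] by simp
    also have "\<dots> \<le> lam * (2*pi*x)" by (rule wq_le[OF x0])
    also have "\<dots> \<le> lam * (2*pi*\<bar>c\<bar>)" using x lam by (intro mult_left_mono) auto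
    finally show "norm (wq lam q \<beta> x) \<le> lam * (2 * pi * \<bar>c\<bar>)" .
  qed
  show "emeasure lborel {a..c} < \<infinity>" by (cases "a \<le> c") auto
qed auto

lemma region_emeasure:
  assumes a: "0 \<le> a"
  shows "emeasure (marked_intensity lam q) (R \<beta> a c) =
         (\<integral>\<^sup>+u. ennreal (indicator {a<..c} u * wq lam q \<beta> u) \<partial>lborel)"
proof -
  define g where "g u = indicator {a<..c} u * ennreal (lam * (if \<beta> then q u else 1 - q u))" for u
  have gm: "g \<in> borel_measurable borel" unfolding g_def by measurable
  have "emeasure (marked_intensity lam q) (R \<beta> a c) = (\<integral>\<^sup>+x. g (norm (x::pt)) \<partial>lborel)"
    apply (subst marked_emeasure[OF qm R_sets])
    apply (rule nn_integral_cong)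
    by (auto simp: g_def dens_def R_def indicator_def)
  also have "\<dots> = (\<integral>\<^sup>+u. indicator {0..} u * ennreal (2*pi*u) * g u \<partial>lborel)"
    by (rule radial_nn[OF gm])
  also have "\<dots> = (\<integral>\<^sup>+u. ennreal (indicator {a<..c} u * wq lam q \<beta> u) \<partial>lborel)"
  proof (rule nn_integral_cong)
    fix u :: real
    show "indicator {0..} u * ennreal (2*pi*u) * g u = ennreal (indicator {a<..c} u * wq lam q \<beta> u)"
    proof (cases "u \<in> {a<..c}")
      case True
      then have u: "0 \<le> u" using a by auto
      have "indicator {0..} u * ennreal (2*pi*u) * g u = ennreal (2*pi*u) * ennreal (lam * (if \<beta> then q u else 1 - q u))"
        using True u by (simp add: g_def)
      also have "\<dots> = ennreal (2*pi*u * (lam * (if \<beta> then q u else 1 - q u)))"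
        using u by (simp add: ennreal_mult')
      also have "\<dots> = ennreal (indicator {a<..c} u * wq lam q \<beta> u)"
        using True by (simp add: wq_def mult_ac)
      finally show ?thesis .
    next
      case False then show ?thesis by (simp add: g_def)
    qed
  qed
  finally show ?thesis .
qed

lemma region_measure:
  assumes a: "0 \<le> a" and ac: "a \<le> c"
  shows "emeasure (marked_intensity lam q) (R \<beta> a c) < \<infinity>"
    and "measure (marked_intensity lam q) (R \<beta> a c) = W lam q \<beta> c - W lam q \<beta> a"
proof -
  have i1: "set_integrable lborel {a..c} (wq lam q \<beta>)" by (rule wq_set_integrable[OF a])
  have i2: "set_integrable lborel {a<..c} (wq lam q \<beta>)"
    by (rule set_integrable_subset[OF i1]) auto
  have "(\<integral>\<^sup>+u. ennreal (indicator {a<..c} u * wq lam q \<beta> u) \<partial>lborel) =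
        ennreal (LINT u:{a<..c}|lborel. wq lam q \<beta> u)"
  proof -
    have i2': "integrable lborel (\<lambda>u. indicator {a<..c} u * wq lam q \<beta> u)"
      using i2 by (simp add: set_integrable_def)
    have "(\<integral>\<^sup>+u. ennreal (indicator {a<..c} u * wq lam q \<beta> u) \<partial>lborel) = ennreal (\<integral>u. indicator {a<..c} u * wq lam q \<beta> u \<partial>lborel)"
      by (rule nn_integral_eq_integral[OF i2']) (use a in \<open>auto simp: indicator_def intro!: wq_nonneg AE_I2\<close>)
    then show ?thesis by (simp add: set_lebesgue_integral_def)
  qed
  then have e: "emeasure (marked_intensity lam q) (R \<beta> a c) = ennreal (LINT u:{a<..c}|lborel. wq lam q \<beta> u)"
    by (simp add: region_emeasure[OF a])
  then show "emeasure (marked_intensity lam q) (R \<beta> a c) < \<infinity>" by simp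
  have nn: "0 \<le> (LINT u:{a<..c}|lborel. wq lam q \<beta> u)"
    unfolding set_lebesgue_integral_def
    by (rule integral_nonneg_AE) (use a in \<open>auto simp: indicator_def intro!: wq_nonneg AE_I2\<close>)
  have "measure (marked_intensity lam q) (R \<beta> a c) = (LINT u:{a<..c}|lborel. wq lam q \<beta> u)"
    using e nn by (simp add: measure_def)
  also have "\<dots> = W lam q \<beta> c - W lam q \<beta> a"
  proof -
    have ia: "set_integrable lborel {0..a} (wq lam q \<beta>)" by (rule wq_set_integrable) simp
    have "{0..c} = {0..a} \<union> {a<..c}" using a ac by auto
    then have "W lam q \<beta> c = (LINT u:{0..a}|lborel. wq lam q \<beta> u) + (LINT u:{a<..c}|lborel. wq lam q \<beta> u)"
      unfolding W_def by (simp add: set_integral_Un[OF _ ia i2] disjoint_iff)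
    then show ?thesis unfolding W_def by simp
  qed
  finally show "measure (marked_intensity lam q) (R \<beta> a c) = W lam q \<beta> c - W lam q \<beta> a" .
qed

lemma W_nonneg: "0 \<le> W lam q \<beta> x"
  unfolding W_def set_lebesgue_integral_def
  by (rule integral_nonneg_AE) (auto simp: indicator_def intro!: wq_nonneg AE_I2)

lemma W_mono: assumes "0 \<le> x" "x \<le> y" shows "W lam q \<beta> x \<le> W lam q \<beta> y"
  using region_measure(2)[OF assms, of \<beta>] measure_nonneg[of "marked_intensity lam q" "R \<beta> x y"] by simp

end



definition pois :: "real \<Rightarrow> nat \<Rightarrow> real" where
  "pois m c = m ^ c / fact c * exp (- m)"

lemma ppp_prob_space: "two_tier_marked_ppp M \<Psi>m \<mu>m \<Psi>s \<mu>s \<Longrightarrow> prob_space M"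
  unfolding two_tier_marked_ppp_def by simp

lemma ppp_lf: "two_tier_marked_ppp M \<Psi>m \<mu>m \<Psi>s \<mu>s \<Longrightarrow> \<omega> \<in> space M \<Longrightarrow> locally_finite (\<Psi>m \<omega>) \<and> locally_finite (\<Psi>s \<omega>)"
  unfolding two_tier_marked_ppp_def by simp

lemma ppp_count_prob:
  fixes n k :: nat and c d :: "nat \<Rightarrow> nat"
  assumes ppp: "two_tier_marked_ppp M \<Psi>m \<mu>m \<Psi>s \<mu>s"
    and dA: "disjoint_family_on A {..<n}" and dB: "disjoint_family_on B {..<k}"
    and A: "\<And>i. i < n \<Longrightarrow> A i \<in> sets mark_space \<and> emeasure \<mu>m (A i) < \<infinity>"
    and B: "\<And>j. j < k \<Longrightarrow> B j \<in> sets mark_space \<and> emeasure \<mu>s (B j) < \<infinity>"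
    and nk: "0 < n"
  shows "measure M {\<omega>\<in>space M. (\<forall>i<n. cnt \<Psi>m (A i) \<omega> = c i) \<and> (\<forall>j<k. cnt \<Psi>s (B j) \<omega> = d j)} =
     (\<Prod>i<n. pois (measure \<mu>m (A i)) (c i)) * (\<Prod>j<k. pois (measure \<mu>s (B j)) (d j))"
proof -
  interpret prob_space M using ppp by (rule ppp_prob_space)
  define X where "X = (\<lambda>i. case i of Inl j \<Rightarrow> cnt \<Psi>m (A j) | Inr j \<Rightarrow> cnt \<Psi>s (B j))"
  define J where "J = Inl ` {..<n} \<union> (Inr ` {..<k} :: (nat + nat) set)"
  define S where "S = (\<lambda>i. case i of Inl j \<Rightarrow> {c j} | Inr j \<Rightarrow> {d j})"
  have ax: "indep_vars (\<lambda>_. count_space (UNIV :: nat set)) X J \<and>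
          (\<forall>i<n. \<forall>c::nat. measure M {\<omega> \<in> space M. cnt \<Psi>m (A i) \<omega> = c} =
               measure \<mu>m (A i) ^ c / fact c * exp (- measure \<mu>m (A i))) \<and>
          (\<forall>j<k. \<forall>c::nat. measure M {\<omega> \<in> space M. cnt \<Psi>s (B j) \<omega> = c} =
               measure \<mu>s (B j) ^ c / fact c * exp (- measure \<mu>s (B j)))"
    using ppp dA dB A B unfolding two_tier_marked_ppp_def X_def J_def by blast
  have "prob (\<Inter>i\<in>J. X i -` S i \<inter> space M) = (\<Prod>i\<in>J. prob (X i -` S i \<inter> space M))"
    by (rule indep_varsD[OF conjunct1[OF ax]]) (use nk in \<open>auto simp: J_def\<close>)
  moreover have "(\<Inter>i\<in>J. X i -` S i \<inter> space M) =
     {\<omega>\<in>space M. (\<forall>i<n. cnt \<Psi>m (A i) \<omega> = c i) \<and> (\<forall>j<k. cnt \<Psi>s (B j) \<omega> = d j)}"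
    using nk by (auto simp: J_def X_def S_def ball_Un)
  moreover have "(\<Prod>i\<in>J. prob (X i -` S i \<inter> space M)) =
     (\<Prod>i\<in>Inl ` {..<n}. prob (X i -` S i \<inter> space M)) * (\<Prod>i\<in>Inr ` {..<k}. prob (X i -` S i \<inter> space M))"
    unfolding J_def by (rule prod.union_disjoint) auto
  moreover have "(\<Prod>i\<in>Inl ` {..<n}. prob (X i -` S i \<inter> space M)) = (\<Prod>i<n. pois (measure \<mu>m (A i)) (c i))"
  proof -
    have "(\<Prod>i\<in>Inl ` {..<n}. prob (X i -` S i \<inter> space M)) = (\<Prod>i<n. prob (X (Inl i) -` S (Inl i) \<inter> space M))"
      by (subst prod.reindex) (auto simp: inj_on_def)
    also have "\<dots> = (\<Prod>i<n. pois (measure \<mu>m (A i)) (c i))"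
    proof (rule prod.cong)
      fix i assume "i \<in> {..<n}"
      then have "measure M {\<omega> \<in> space M. cnt \<Psi>m (A i) \<omega> = c i} = pois (measure \<mu>m (A i)) (c i)"
        using ax unfolding pois_def by auto
      moreover have "X (Inl i) -` S (Inl i) \<inter> space M = {\<omega> \<in> space M. cnt \<Psi>m (A i) \<omega> = c i}"
        by (auto simp: X_def S_def)
      ultimately show "prob (X (Inl i) -` S (Inl i) \<inter> space M) = pois (measure \<mu>m (A i)) (c i)" by simp
    qed simp
    finally show ?thesis .
  qed
  moreover have "(\<Prod>i\<in>Inr ` {..<k}. prob (X i -` S i \<inter> space M)) = (\<Prod>j<k. pois (measure \<mu>s (B j)) (d j))"
  proof -
    have "(\<Prod>i\<in>Inr ` {..<k}. prob (X i -` S i \<inter> space M)) = (\<Prod>i<k. prob (X (Inr i) -` S (Inr i) \<inter> space M))"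
      by (subst prod.reindex) (auto simp: inj_on_def)
    also have "\<dots> = (\<Prod>j<k. pois (measure \<mu>s (B j)) (d j))"
    proof (rule prod.cong)
      fix i assume "i \<in> {..<k}"
      then have "measure M {\<omega> \<in> space M. cnt \<Psi>s (B i) \<omega> = d i} = pois (measure \<mu>s (B i)) (d i)"
        using ax unfolding pois_def by auto
      moreover have "X (Inr i) -` S (Inr i) \<inter> space M = {\<omega> \<in> space M. cnt \<Psi>s (B i) \<omega> = d i}"
        by (auto simp: X_def S_def)
      ultimately show "prob (X (Inr i) -` S (Inr i) \<inter> space M) = pois (measure \<mu>s (B i)) (d i)" by simp
    qed simp
    finally show ?thesis .
  qed
  ultimately show ?thesis by simp
qed

lemma ppp_cnt_sets:
  assumes ppp: "two_tier_marked_ppp M \<Psi>m \<mu>m \<Psi>s \<mu>s"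
    and A: "A \<in> sets mark_space" "emeasure \<mu>m A < \<infinity>"
    and B: "B \<in> sets mark_space" "emeasure \<mu>s B < \<infinity>"
  shows "{\<omega>\<in>space M. cnt \<Psi>m A \<omega> = c} \<in> sets M" "{\<omega>\<in>space M. cnt \<Psi>s B \<omega> = c} \<in> sets M"
proof -
  interpret prob_space M using ppp by (rule ppp_prob_space)
  define X where "X = (\<lambda>i. case i of Inl (j::nat) \<Rightarrow> cnt \<Psi>m A | Inr (j::nat) \<Rightarrow> cnt \<Psi>s B)"
  have "indep_vars (\<lambda>_. count_space (UNIV :: nat set)) X (Inl ` {..<1} \<union> Inr ` {..<1})"
    using ppp A B unfolding two_tier_marked_ppp_def X_def
    apply (elim conjE)
    apply (drule spec[of _ 1], drule spec[of _ 1], drule spec[of _ "\<lambda>_. A"], drule spec[of _ "\<lambda>_. B"])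
    by (auto simp: disjoint_family_on_def)
  then have "random_variable (count_space UNIV) (X (Inl 0))" "random_variable (count_space UNIV) (X (Inr 0))"
    unfolding indep_vars_def by auto
  then have m1: "cnt \<Psi>m A \<in> measurable M (count_space UNIV)" and m2: "cnt \<Psi>s B \<in> measurable M (count_space UNIV)"
    by (auto simp: X_def)
  show "{\<omega>\<in>space M. cnt \<Psi>m A \<omega> = c} \<in> sets M" using m1 by measurable
  show "{\<omega>\<in>space M. cnt \<Psi>s B \<omega> = c} \<in> sets M" using m2 by measurable
qed



definition gf :: "real \<Rightarrow> real \<Rightarrow> real \<Rightarrow> real \<Rightarrow> real \<Rightarrow> real" where
  "gf c a c0 a0 r = (c / c0) powr (1 / a) * r powr (a0 / a)"

lemma powr_root_less_iff:
  fixes X Y a :: real assumes "0 < X" "0 < Y" "0 < a"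
  shows "X < Y \<longleftrightarrow> X powr (1/a) < Y powr (1/a)"
proof
  assume "X < Y" then show "X powr (1/a) < Y powr (1/a)" using assms by (intro powr_less_mono2) auto
next
  assume h: "X powr (1/a) < Y powr (1/a)"
  show "X < Y"
  proof (rule ccontr)
    assume "\<not> X < Y" then have "Y \<le> X" by simp
    then have "Y powr (1/a) \<le> X powr (1/a)" using assms by (intro powr_mono2) auto
    with h show False by simp
  qed
qed

lemma gkey:
  assumes c: "0 < c" "0 < c0" "0 < a" "0 < a0" and u: "0 < u" and r: "0 < r"
  shows "c * u powr (- a) < c0 * r powr (- a0) \<longleftrightarrow> gf c a c0 a0 r < u"
proof -
  have "c * u powr (- a) < c0 * r powr (- a0) \<longleftrightarrow> (c / c0) * r powr a0 < u powr a"
    using c u r by (simp add: powr_minus field_simps)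
  also have "\<dots> \<longleftrightarrow> ((c / c0) * r powr a0) powr (1/a) < (u powr a) powr (1/a)"
    using c u r by (intro powr_root_less_iff) auto
  also have "((c / c0) * r powr a0) powr (1/a) = gf c a c0 a0 r"
    unfolding gf_def by (simp only: powr_mult powr_powr) simp
  also have "(u powr a) powr (1/a) = u" using c u by (simp add: powr_powr)
  finally show ?thesis .
qed

lemma gf_nonneg: "0 \<le> gf c a c0 a0 r"
  unfolding gf_def by simp

lemma gf_zero: "0 < a0 \<Longrightarrow> 0 < a \<Longrightarrow> gf c a c0 a0 0 = 0"
  unfolding gf_def by simp

lemma gf_mono: assumes "0 < a" "0 < a0" "0 \<le> r" "r \<le> r'" shows "gf c a c0 a0 r \<le> gf c a c0 a0 r'"
  unfolding gf_def using assms by (intro mult_left_mono powr_mono2) auto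

lemma gf_strict_mono: assumes "0 < c" "0 < c0" "0 < a" "0 < a0" "0 \<le> r" "r < r'" shows "gf c a c0 a0 r < gf c a c0 a0 r'"
  unfolding gf_def using assms by (intro mult_strict_left_mono powr_less_mono2) auto



lemma le_of_forall_inverse:
  fixes x y C :: real
  assumes C: "0 \<le> C" and h: "\<And>n::nat. 0 < n \<Longrightarrow> x \<le> y + C / real n"
  shows "x \<le> y"
proof (rule ccontr)
  assume "\<not> x \<le> y"
  then have e: "0 < x - y" by simp
  obtain n :: nat where n: "C / (x - y) < real n" using reals_Archimedean2 by blast
  have "0 \<le> C / (x - y)" using C e by simp
  then have n0: "0 < n" using n by (cases n) auto
  have "C < real n * (x - y)" using n e by (simp add: field_simps)
  then have "C / real n < x - y" using n0 by (simp add: field_simps)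
  with h[OF n0] show False by simp
qed

lemma set_int_bounded:
  fixes f :: "real \<Rightarrow> real"
  assumes fm: "f \<in> borel_measurable borel" and b: "\<And>u. a \<le> u \<Longrightarrow> u \<le> c \<Longrightarrow> \<bar>f u\<bar> \<le> B"
  shows "set_integrable lborel {a..c} f"
  unfolding set_integrable_def
proof (rule integrableI_bounded_set_indicator[where B=B])
  show "AE x in lborel. x \<in> {a..c} \<longrightarrow> norm (f x) \<le> B" using b by (auto intro!: AE_I2)
  show "emeasure lborel {a..c} < \<infinity>" by (cases "a \<le> c") auto
qed (use fm in auto)

lemma set_int_split:
  fixes f :: "real \<Rightarrow> real"
  assumes i: "set_integrable lborel {0..c} f" and a: "0 \<le> a" "a \<le> c"
  shows "(LINT u:{a<..c}|lborel. f u) = (LINT u:{0..c}|lborel. f u) - (LINT u:{0..a}|lborel. f u)"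
proof -
  have ia: "set_integrable lborel {0..a} f" by (rule set_integrable_subset[OF i]) (use a in auto)
  have i2: "set_integrable lborel {a<..c} f" by (rule set_integrable_subset[OF i]) (use a in auto)
  have "{0..c} = {0..a} \<union> {a<..c}" using a by auto
  then have "(LINT u:{0..c}|lborel. f u) = (LINT u:{0..a}|lborel. f u) + (LINT u:{a<..c}|lborel. f u)"
    by (simp add: set_integral_Un[OF _ ia i2] disjoint_iff)
  then show ?thesis by simp
qed

lemma set_int_zero: "(LINT u:{0..0}|lborel. (f::real\<Rightarrow>real) u) = 0"
proof -
  have "(\<lambda>x. indicator {0..0} x *\<^sub>R f x) = (\<lambda>x. f 0 * indicator {0} x)"
    by (auto simp: fun_eq_iff indicator_def)
  then show ?thesis unfolding set_lebesgue_integral_def by simp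
qed


lemma analytic:
  fixes w Mf :: "real \<Rightarrow> real" and P K :: real
  assumes wm[measurable]: "w \<in> borel_measurable borel" and w0: "\<And>u. 0 \<le> u \<Longrightarrow> 0 \<le> w u"
    and wK: "\<And>u. 0 \<le> u \<Longrightarrow> w u \<le> K * u" and K: "0 \<le> K"
    and Mm: "\<And>x y. 0 \<le> x \<Longrightarrow> x \<le> y \<Longrightarrow> Mf x \<le> Mf y" and M0: "Mf 0 = 0"
    and Minf: "filterlim (\<lambda>N::nat. Mf (real N)) at_top sequentially"
    and low: "\<And>T n. 0 < T \<Longrightarrow> 0 < n \<Longrightarrow>
       (\<Sum>j<n. ((LINT u:{0..real (Suc j) * T / real n}|lborel. w u) - (LINT u:{0..real j * T / real n}|lborel. w u))
                * exp (- Mf (real (Suc j) * T / real n))) \<le> P"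
    and upp: "\<And>T n. 0 < T \<Longrightarrow> 0 < n \<Longrightarrow>
       P \<le> (\<Sum>j<n. exp (- Mf (real j * T / real n)) *
              ((LINT u:{0..real (Suc j) * T / real n}|lborel. w u) - (LINT u:{0..real j * T / real n}|lborel. w u)))
            + exp (- Mf T)"
  shows "P = (LINT r:{0<..}|lborel. w r * exp (- Mf r))"
proof -
  define V where "V x = (LINT u:{0..x}|lborel. w u)" for x
  define Mp where "Mp r = Mf (max 0 r)" for r
  have "mono Mp" unfolding mono_def Mp_def by (auto intro!: Mm)
  then have Mpm[measurable]: "Mp \<in> borel_measurable borel" by (rule borel_measurable_mono)
  have Mp0: "0 \<le> Mp r" for r unfolding Mp_def using Mm[of 0 "max 0 r"] M0 by simp
  define \<phi> where "\<phi> r = w r * exp (- Mp r)" for r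
  have \<phi>m[measurable]: "\<phi> \<in> borel_measurable borel" unfolding \<phi>_def by measurable
  have \<phi>0: "0 \<le> \<phi> u" if "0 \<le> u" for u unfolding \<phi>_def using w0[OF that] by simp
  have \<phi>w: "\<phi> u \<le> w u" if "0 \<le> u" for u
  proof -
    have "exp (- Mp u) \<le> 1" using Mp0[of u] by simp
    then show ?thesis unfolding \<phi>_def using w0[OF that] by (simp add: mult_left_le)
  qed
  define I where "I x = (LINT u:{0..x}|lborel. \<phi> u)" for x
  have intw: "set_integrable lborel {0..c} w" if "0 \<le> c" for c
  proof (rule set_int_bounded[where B="K*c"])
    fix u assume u: "0 \<le> u" "u \<le> c"
    have "\<bar>w u\<bar> = w u" using w0[OF u(1)] by simp
    also have "\<dots> \<le> K * u" by (rule wK[OF u(1)])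
    also have "\<dots> \<le> K * c" using u K by (intro mult_left_mono) auto
    finally show "\<bar>w u\<bar> \<le> K * c" .
  qed simp
  have int\<phi>: "set_integrable lborel {0..c} \<phi>" if "0 \<le> c" for c
  proof (rule set_int_bounded[where B="K*c"])
    fix u assume u: "0 \<le> u" "u \<le> c"
    have "\<bar>\<phi> u\<bar> = \<phi> u" using \<phi>0[OF u(1)] by simp
    also have "\<dots> \<le> w u" by (rule \<phi>w[OF u(1)])
    also have "\<dots> \<le> K * u" by (rule wK[OF u(1)])
    also have "\<dots> \<le> K * c" using u K by (intro mult_left_mono) auto
    finally show "\<bar>\<phi> u\<bar> \<le> K * c" .
  qed simp
  have step: "exp (- Mf t) * (V t - V s) \<le> I t - I s \<and> I t - I s \<le> exp (- Mf s) * (V t - V s)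
      \<and> 0 \<le> V t - V s \<and> V t - V s \<le> K * t * (t - s)" if st: "0 \<le> s" "s \<le> t" for s t
  proof -
    have t0: "0 \<le> t" using st by simp
    have iw: "set_integrable lborel {s<..t} w" by (rule set_integrable_subset[OF intw[OF t0]]) (use st in auto)
    have i\<phi>: "set_integrable lborel {s<..t} \<phi>" by (rule set_integrable_subset[OF int\<phi>[OF t0]]) (use st in auto)
    have Vd: "V t - V s = (LINT u:{s<..t}|lborel. w u)"
      unfolding V_def by (rule set_int_split[OF intw[OF t0] st, symmetric])
    have Id: "I t - I s = (LINT u:{s<..t}|lborel. \<phi> u)"
      unfolding I_def by (rule set_int_split[OF int\<phi>[OF t0] st, symmetric])
    have "exp (- Mf t) * (V t - V s) = (LINT u:{s<..t}|lborel. exp (- Mf t) * w u)" using Vd by simp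
    also have "\<dots> \<le> (LINT u:{s<..t}|lborel. \<phi> u)"
    proof (rule set_integral_mono)
      show "set_integrable lborel {s<..t} (\<lambda>u. exp (- Mf t) * w u)"
        using iw by (rule set_integrable_mult_right)
      show "set_integrable lborel {s<..t} \<phi>" by (rule i\<phi>)
      fix u assume u: "u \<in> {s<..t}"
      then have "Mp u = Mf u" using st by (simp add: Mp_def max_def)
      moreover have "Mf u \<le> Mf t" using u st by (intro Mm) auto
      ultimately have "exp (- Mf t) \<le> exp (- Mp u)" by simp
      moreover have "0 \<le> w u" using w0[of u] u st by simp
      ultimately show "exp (- Mf t) * w u \<le> \<phi> u" unfolding \<phi>_def
        by (simp add: mult.commute mult_left_mono)
    qed
    also have "\<dots> = I t - I s" using Id by simp
    finally have A: "exp (- Mf t) * (V t - V s) \<le> I t - I s" .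
    have "I t - I s = (LINT u:{s<..t}|lborel. \<phi> u)" by (rule Id)
    also have "\<dots> \<le> (LINT u:{s<..t}|lborel. exp (- Mf s) * w u)"
    proof (rule set_integral_mono)
      show "set_integrable lborel {s<..t} (\<lambda>u. exp (- Mf s) * w u)"
        using iw by (rule set_integrable_mult_right)
      show "set_integrable lborel {s<..t} \<phi>" by (rule i\<phi>)
      fix u assume u: "u \<in> {s<..t}"
      then have "Mp u = Mf u" using st by (simp add: Mp_def max_def)
      moreover have "Mf s \<le> Mf u" using u st by (intro Mm) auto
      ultimately have "exp (- Mp u) \<le> exp (- Mf s)" by simp
      then show "\<phi> u \<le> exp (- Mf s) * w u" unfolding \<phi>_def using w0[of u] u st
        by (simp add: mult.commute mult_left_mono)
    qed
    also have "\<dots> = exp (- Mf s) * (V t - V s)" using Vd by simp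
    finally have B: "I t - I s \<le> exp (- Mf s) * (V t - V s)" .
    have C: "0 \<le> V t - V s" unfolding Vd set_lebesgue_integral_def
      by (rule integral_nonneg_AE) (use st in \<open>auto simp: indicator_def intro!: AE_I2 w0\<close>)
    have "V t - V s \<le> (LINT u:{s<..t}|lborel. K * t)"
      unfolding Vd
    proof (rule set_integral_mono[OF iw])
      show "set_integrable lborel {s<..t} (\<lambda>u. K * t)"
        by (rule set_integrable_subset[where A="{0..t}"], rule set_int_bounded[where B="\<bar>K*t\<bar>"]) (use st in auto)
      fix u assume u: "u \<in> {s<..t}"
      then show "w u \<le> K * t" using wK[of u] K st by (auto intro: order.trans mult_left_mono)
    qed
    also have "\<dots> = K * t * (t - s)" using st by (simp add: set_integral_const)
    finally have D: "V t - V s \<le> K * t * (t - s)" .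
    show ?thesis using A B C D by simp
  qed
  have I0: "I 0 = 0" unfolding I_def by (rule set_int_zero)
  have Inn: "0 \<le> I x" for x unfolding I_def set_lebesgue_integral_def
    by (rule integral_nonneg_AE) (auto simp: indicator_def intro!: AE_I2 \<phi>0)
  have IT: "I T \<le> P \<and> P \<le> I T + exp (- Mf T)" if T: "0 < T" for T
  proof -
    have nb: "I T \<le> P + K*T*T/real n \<and> P \<le> I T + exp (- Mf T) + K*T*T/real n" if n: "0 < n" for n :: nat
    proof -
      define \<tau> where "\<tau> j = real j * T / real n" for j :: nat
      have \<tau>0: "0 \<le> \<tau> j" for j unfolding \<tau>_def using T by simp
      have \<tau>s: "\<tau> j \<le> \<tau> (Suc j)" for j unfolding \<tau>_def using T n by (simp add: divide_right_mono)
      have \<tau>d: "\<tau> (Suc j) - \<tau> j = T / real n" for j unfolding \<tau>_def by (simp add: add_divide_distrib algebra_simps)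
      have \<tau>T: "\<tau> (Suc j) \<le> T" if "j < n" for j
      proof -
        have "real (Suc j) \<le> real n" using that by simp
        then have "real (Suc j) * T \<le> real n * T" using T by (intro mult_right_mono) auto
        then show ?thesis unfolding \<tau>_def using n by (simp add: field_simps)
      qed
      have \<tau>n: "\<tau> n = T" using n unfolding \<tau>_def by simp
      have \<tau>z: "\<tau> 0 = 0" unfolding \<tau>_def by simp
      define D where "D j = V (\<tau> (Suc j)) - V (\<tau> j)" for j
      define e where "e j = exp (- Mf (\<tau> j))" for j
      have Dle: "D j \<le> K*T*T/real n" if "j < n" for j
      proof -
        have "D j \<le> K * \<tau> (Suc j) * (\<tau> (Suc j) - \<tau> j)"
          unfolding D_def using step[OF \<tau>0 \<tau>s, of j] by simp
        also have "\<dots> = K * \<tau> (Suc j) * (T / real n)" by (simp add: \<tau>d)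
        also have "\<dots> \<le> K * T * (T / real n)"
          using K \<tau>T[OF that] T n \<tau>0[of "Suc j"] by (intro mult_right_mono mult_left_mono) auto
        finally show ?thesis by simp
      qed
      have D0: "0 \<le> D j" for j unfolding D_def using step[OF \<tau>0 \<tau>s, of j] by simp
      have ede: "0 \<le> e j - e (Suc j)" for j
        unfolding e_def using Mm[OF \<tau>0 \<tau>s, of j] by simp
      have sumI: "(\<Sum>j<n. I (\<tau> (Suc j)) - I (\<tau> j)) = I T"
        by (subst sum_lessThan_telescope) (simp add: \<tau>n \<tau>z I0)
      have tel: "(\<Sum>j<n. e j - e (Suc j)) \<le> 1"
        by (subst sum_lessThan_telescope') (simp add: e_def \<tau>z M0)
      have "(\<Sum>j<n. e j * D j) - (\<Sum>j<n. D j * e (Suc j)) = (\<Sum>j<n. (e j - e (Suc j)) * D j)"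
        by (simp add: sum_subtractf[symmetric] algebra_simps)
      also have "\<dots> \<le> (\<Sum>j<n. (e j - e (Suc j)) * (K*T*T/real n))"
        by (intro sum_mono mult_left_mono Dle ede) auto
      also have "\<dots> = (\<Sum>j<n. e j - e (Suc j)) * (K*T*T/real n)" by (rule sum_distrib_right[symmetric])
      also have "\<dots> \<le> 1 * (K*T*T/real n)"
        using tel K T by (intro mult_right_mono) auto
      finally have gap: "(\<Sum>j<n. e j * D j) - (\<Sum>j<n. D j * e (Suc j)) \<le> K*T*T/real n" by simp
      have A: "I T \<le> (\<Sum>j<n. e j * D j)"
        unfolding sumI[symmetric] by (intro sum_mono) (use step[OF \<tau>0 \<tau>s] in \<open>auto simp: e_def D_def\<close>)
      have B: "(\<Sum>j<n. D j * e (Suc j)) \<le> I T"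
        unfolding sumI[symmetric] by (intro sum_mono) (use step[OF \<tau>0 \<tau>s] in \<open>auto simp: e_def D_def mult.commute\<close>)
      have L: "(\<Sum>j<n. D j * e (Suc j)) \<le> P"
        using low[OF T n] unfolding D_def e_def V_def \<tau>_def .
      have U: "P \<le> (\<Sum>j<n. e j * D j) + exp (- Mf T)"
        using upp[OF T n] unfolding D_def e_def V_def \<tau>_def .
      show ?thesis using A B L U gap by linarith
    qed
    have "I T \<le> P" by (rule le_of_forall_inverse[where C="K*T*T"]) (use nb K T in \<open>auto simp: add_ac\<close>)
    moreover have "P \<le> I T + exp (- Mf T)"
      by (rule le_of_forall_inverse[where C="K*T*T"]) (use nb K T in \<open>auto simp: add_ac\<close>)
    ultimately show ?thesis by simp
  qed
  have P0: "0 \<le> P" using IT[of 1] Inn[of 1] by simp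
  have int0: "set_integrable lborel {0..} \<phi>"
  proof -
    define f where "f i x = ennreal (indicator {0..real i} x * \<phi> x)" for i :: nat and x
    have fm: "f i \<in> borel_measurable lborel" for i unfolding f_def by measurable
    have finc: "incseq f"
      unfolding incseq_def le_fun_def f_def
      by (auto simp: indicator_def intro!: ennreal_leI \<phi>0)
    have flim: "(\<lambda>i. f i x) \<longlonglongrightarrow> ennreal (indicator {0..} x * \<phi> x)" for x
    proof (rule tendsto_eventually)
      obtain N :: nat where "x \<le> real N" using real_arch_simple by blast
      then show "\<forall>\<^sub>F i in sequentially. f i x = ennreal (indicator {0..} x * \<phi> x)"
        unfolding f_def eventually_sequentially
        by (intro exI[of _ N]) (auto simp: indicator_def)
    qed
    have "(\<lambda>i. \<integral>\<^sup>+x. f i x \<partial>lborel) \<longlonglongrightarrow> (\<integral>\<^sup>+x. ennreal (indicator {0..} x * \<phi> x) \<partial>lborel)"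
      by (rule nn_integral_LIMSEQ[OF finc fm flim])
    moreover have "(\<integral>\<^sup>+x. f i x \<partial>lborel) \<le> ennreal P" for i
    proof -
      have ii: "integrable lborel (\<lambda>x. indicator {0..real i} x * \<phi> x)"
        using int\<phi>[of "real i"] by (simp add: set_integrable_def)
      have "(\<integral>\<^sup>+x. f i x \<partial>lborel) = ennreal (I (real i))"
        unfolding f_def I_def set_lebesgue_integral_def
        by (subst nn_integral_eq_integral[OF ii]) (auto simp: indicator_def intro!: AE_I2 \<phi>0)
      also have "\<dots> \<le> ennreal P"
      proof (cases "i = 0")
        case True then show ?thesis using I0 P0 by simp
      next
        case False then show ?thesis using IT[of "real i"] by (intro ennreal_leI) auto
      qed
      finally show ?thesis .
    qed
    ultimately have "(\<integral>\<^sup>+x. ennreal (indicator {0..} x * \<phi> x) \<partial>lborel) \<le> ennreal P"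
      by (intro LIMSEQ_le_const2) auto
    then have "(\<integral>\<^sup>+x. ennreal (indicator {0..} x * \<phi> x) \<partial>lborel) < \<infinity>"
      by (rule le_less_trans) simp
    then have "integrable lborel (\<lambda>x. indicator {0..} x * \<phi> x)"
      by (intro integrableI_nonneg) (auto simp: indicator_def intro!: AE_I2 \<phi>0)
    then show ?thesis by (simp add: set_integrable_def)
  qed
  have lim1: "(\<lambda>N::nat. I (real N)) \<longlonglongrightarrow> (LINT u:{0..}|lborel. \<phi> u)"
    unfolding I_def
    by (rule filterlim_compose[OF tendsto_set_lebesgue_integral_at_top[OF _ int0] filterlim_real_sequentially]) auto
  have lim2: "(\<lambda>N::nat. exp (- Mf (real N))) \<longlonglongrightarrow> 0"
    by (rule filterlim_compose[OF filterlim_compose[OF exp_at_bot filterlim_uminus_at_bot_at_top] Minf])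
  have lim3: "(\<lambda>N::nat. P - I (real N)) \<longlonglongrightarrow> 0"
  proof (rule tendsto_sandwich[OF _ _ tendsto_const lim2])
    show "\<forall>\<^sub>F N in sequentially. 0 \<le> P - I (real N)"
      unfolding eventually_sequentially
    proof (intro exI[of _ 1] allI impI)
      fix N :: nat assume "1 \<le> N" then have "0 < real N" by simp
      from IT[OF this] show "0 \<le> P - I (real N)" by simp
    qed
    show "\<forall>\<^sub>F N in sequentially. P - I (real N) \<le> exp (- Mf (real N))"
      unfolding eventually_sequentially
    proof (intro exI[of _ 1] allI impI)
      fix N :: nat assume "1 \<le> N" then have "0 < real N" by simp
      from IT[OF this] show "P - I (real N) \<le> exp (- Mf (real N))" by simp
    qed
  qed
  have "(\<lambda>N::nat. P - I (real N)) \<longlonglongrightarrow> P - (LINT u:{0..}|lborel. \<phi> u)"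
    by (intro tendsto_intros lim1)
  with lim3 have eq: "P = (LINT u:{0..}|lborel. \<phi> u)"
    using LIMSEQ_unique by fastforce
  also have "\<dots> = (LINT u:{0<..}|lborel. \<phi> u)"
  proof (rule set_integral_cong_set)
    show "AE x in lborel. ((x::real) \<in> {0<..}) = (x \<in> {0..})"
      by (rule AE_I'[where N="{0::real}"]) auto
  qed (auto simp: set_borel_measurable_def)
  also have "\<dots> = (LINT r:{0<..}|lborel. w r * exp (- Mf r))"
    by (rule set_lebesgue_integral_cong) (auto simp: \<phi>_def Mp_def)
  finally show ?thesis .
qed





lemma gf_self: "0 < c \<Longrightarrow> 0 < a \<Longrightarrow> 0 < t \<Longrightarrow> gf c a c a t = t"
  unfolding gf_def by simp

lemma all_less_3: "(\<forall>i<(3::nat). P i) \<longleftrightarrow> P 0 \<and> P 1 \<and> P 2"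
  by (auto simp: numeral_eq_Suc less_Suc_eq)

lemma all_less_2: "(\<forall>i<(2::nat). P i) \<longleftrightarrow> P 0 \<and> P 1"
  by (auto simp: numeral_eq_Suc less_Suc_eq)

lemma prod_lt3: "(\<Prod>i<(3::nat). f i) = f 0 * f 1 * (f 2 :: real)"
  by (simp add: eval_nat_numeral)

lemma prod_lt2: "(\<Prod>i<(2::nat). f i) = f 0 * (f 1 :: real)"
  by (simp add: eval_nat_numeral)

lemma disj3: "A0 \<inter> A1 = {} \<Longrightarrow> A0 \<inter> A2 = {} \<Longrightarrow> A1 \<inter> A2 = {} \<Longrightarrow> disjoint_family_on (\<lambda>i. [A0,A1,A2] ! i) {..<3}"
  unfolding disjoint_family_on_def by (auto simp: numeral_eq_Suc less_Suc_eq) blast+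

lemma disj2: "B0 \<inter> B1 = {} \<Longrightarrow> disjoint_family_on (\<lambda>i. [B0,B1] ! i) {..<2}"
  unfolding disjoint_family_on_def by (auto simp: numeral_eq_Suc less_Suc_eq) blast+

lemma prob5_gen:
  assumes ppp: "two_tier_marked_ppp M \<Psi>m \<mu>m \<Psi>s \<mu>s"
    and dA: "A0 \<inter> A1 = {}" "A0 \<inter> A2 = {}" "A1 \<inter> A2 = {}" and dB: "B0 \<inter> B1 = {}"
    and A: "\<And>A. A \<in> {A0,A1,A2} \<Longrightarrow> A \<in> sets mark_space \<and> emeasure \<mu>m A < \<infinity>"
    and B: "\<And>B. B \<in> {B0,B1} \<Longrightarrow> B \<in> sets mark_space \<and> emeasure \<mu>s B < \<infinity>"
  shows "measure M {\<omega>\<in>space M. cnt \<Psi>m A0 \<omega> = x0 \<and> cnt \<Psi>m A1 \<omega> = x1 \<and> cnt \<Psi>m A2 \<omega> = x2 \<and> cnt \<Psi>s B0 \<omega> = y0 \<and> cnt \<Psi>s B1 \<omega> = y1}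
    = pois (measure \<mu>m A0) x0 * pois (measure \<mu>m A1) x1 * pois (measure \<mu>m A2) x2 * pois (measure \<mu>s B0) y0 * pois (measure \<mu>s B1) y1"
proof -
  have "measure M {\<omega>\<in>space M. (\<forall>i<3. cnt \<Psi>m ([A0,A1,A2] ! i) \<omega> = [x0,x1,x2] ! i) \<and> (\<forall>j<2. cnt \<Psi>s ([B0,B1] ! j) \<omega> = [y0,y1] ! j)} =
     (\<Prod>i<3. pois (measure \<mu>m ([A0,A1,A2] ! i)) ([x0,x1,x2] ! i)) * (\<Prod>j<2. pois (measure \<mu>s ([B0,B1] ! j)) ([y0,y1] ! j))"
  proof (rule ppp_count_prob[OF ppp disj3[OF dA] disj2[OF dB]])
    fix i :: nat assume "i < 3"
    then have "i = 0 \<or> i = 1 \<or> i = 2" by linarith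
    then show "[A0,A1,A2] ! i \<in> sets mark_space \<and> emeasure \<mu>m ([A0,A1,A2] ! i) < \<infinity>"
      using A[of A0] A[of A1] A[of A2] by (elim disjE) simp_all
  next
    fix i :: nat assume "i < 2"
    then have "i = 0 \<or> i = 1" by linarith
    then show "[B0,B1] ! i \<in> sets mark_space \<and> emeasure \<mu>s ([B0,B1] ! i) < \<infinity>"
      using B[of B0] B[of B1] by (elim disjE) simp_all
  qed simp
  then show ?thesis by (simp only: all_less_3 all_less_2 prod_lt3 prod_lt2) (simp add: mult.assoc)
qed

lemma prob5_gen':
  assumes ppp: "two_tier_marked_ppp M \<Psi>s \<mu>s \<Psi>m \<mu>m"
    and dA: "A0 \<inter> A1 = {}" "A0 \<inter> A2 = {}" "A1 \<inter> A2 = {}" and dB: "B0 \<inter> B1 = {}"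
    and A: "\<And>A. A \<in> {A0,A1,A2} \<Longrightarrow> A \<in> sets mark_space \<and> emeasure \<mu>m A < \<infinity>"
    and B: "\<And>B. B \<in> {B0,B1} \<Longrightarrow> B \<in> sets mark_space \<and> emeasure \<mu>s B < \<infinity>"
  shows "measure M {\<omega>\<in>space M. cnt \<Psi>m A0 \<omega> = x0 \<and> cnt \<Psi>m A1 \<omega> = x1 \<and> cnt \<Psi>m A2 \<omega> = x2 \<and> cnt \<Psi>s B0 \<omega> = y0 \<and> cnt \<Psi>s B1 \<omega> = y1}
    = pois (measure \<mu>m A0) x0 * pois (measure \<mu>m A1) x1 * pois (measure \<mu>m A2) x2 * pois (measure \<mu>s B0) y0 * pois (measure \<mu>s B1) y1"
proof -
  have "measure M {\<omega>\<in>space M. (\<forall>i<2. cnt \<Psi>s ([B0,B1] ! i) \<omega> = [y0,y1] ! i) \<and> (\<forall>j<3. cnt \<Psi>m ([A0,A1,A2] ! j) \<omega> = [x0,x1,x2] ! j)} =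
     (\<Prod>i<2. pois (measure \<mu>s ([B0,B1] ! i)) ([y0,y1] ! i)) * (\<Prod>j<3. pois (measure \<mu>m ([A0,A1,A2] ! j)) ([x0,x1,x2] ! j))"
  proof (rule ppp_count_prob[OF ppp disj2[OF dB] disj3[OF dA]])
    fix i :: nat assume "i < 3"
    then have "i = 0 \<or> i = 1 \<or> i = 2" by linarith
    then show "[A0,A1,A2] ! i \<in> sets mark_space \<and> emeasure \<mu>m ([A0,A1,A2] ! i) < \<infinity>"
      using A[of A0] A[of A1] A[of A2] by (elim disjE) simp_all
  next
    fix i :: nat assume "i < 2"
    then have "i = 0 \<or> i = 1" by linarith
    then show "[B0,B1] ! i \<in> sets mark_space \<and> emeasure \<mu>s ([B0,B1] ! i) < \<infinity>"
      using B[of B0] B[of B1] by (elim disjE) simp_all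
  qed simp
  then show ?thesis by (simp only: all_less_3 all_less_2 prod_lt3 prod_lt2) (simp add: mult_ac conj_ac)
qed




lemma R_bounded: "R \<beta> a c \<subseteq> {z. norm (fst z) \<le> c}"
  unfolding R_def by auto

lemma lf_finite: "locally_finite S \<Longrightarrow> A \<subseteq> {z. norm (fst z) \<le> c} \<Longrightarrow> finite (S \<inter> A)"
  unfolding locally_finite_def by (rule finite_subset[of _ "{z \<in> S. norm (fst z) \<le> c}"]) auto

locale scen =
  fixes M :: "'a measure" and \<Psi>o \<Psi>t :: "'a \<Rightarrow> (pt \<times> bool) set"
    and lo :: real and qo :: "real \<Rightarrow> real" and lt :: real and qt :: "real \<Rightarrow> real" and b :: bool
    and c0 a0 c1 a1 c2 a2 c3 a3 :: real
  assumes ppp: "two_tier_marked_ppp M \<Psi>o (marked_intensity lo qo) \<Psi>t (marked_intensity lt qt) \<or>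
                two_tier_marked_ppp M \<Psi>t (marked_intensity lt qt) \<Psi>o (marked_intensity lo qo)"
    and to: "tier lo qo" and tt: "tier lt qt" and lo_pos: "0 < lo"
    and cpos: "0 < c0" "0 < a0" "0 < c1" "0 < a1" "0 < c2" "0 < a2" "0 < c3" "0 < a3"
begin

sublocale To: tier lo qo by (rule to)
sublocale Tt: tier lt qt by (rule tt)

definition po :: "pt \<times> bool \<Rightarrow> real" where
  "po z = (if snd z = b then c0 * norm (fst z) powr (- a0) else c1 * norm (fst z) powr (- a1))"
definition pt :: "pt \<times> bool \<Rightarrow> real" where
  "pt z = (if snd z then c2 * norm (fst z) powr (- a2) else c3 * norm (fst z) powr (- a3))"
definition g1 where "g1 = gf c1 a1 c0 a0"
definition g2 where "g2 = gf c2 a2 c0 a0"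
definition g3 where "g3 = gf c3 a3 c0 a0"
definition \<theta> where "\<theta> t = c0 * t powr (- a0)"
definition Lo where "Lo t = R b 0 t \<union> R (\<not> b) 0 (g1 t)"
definition Lt where "Lt t = R True 0 (g2 t) \<union> R False 0 (g3 t)"

lemma psp: "prob_space M" using ppp ppp_prob_space by blast

lemma lf: "\<omega> \<in> space M \<Longrightarrow> locally_finite (\<Psi>o \<omega>) \<and> locally_finite (\<Psi>t \<omega>)"
proof -
  assume w: "\<omega> \<in> space M"
  from ppp show ?thesis
  proof
    assume "two_tier_marked_ppp M \<Psi>o (marked_intensity lo qo) \<Psi>t (marked_intensity lt qt)"
    from ppp_lf[OF this w] show ?thesis .
  next
    assume "two_tier_marked_ppp M \<Psi>t (marked_intensity lt qt) \<Psi>o (marked_intensity lo qo)"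
    from ppp_lf[OF this w] show ?thesis by simp
  qed
qed

lemma po_nonneg: "0 \<le> po y" unfolding po_def using cpos by simp
lemma pt_nonneg: "0 \<le> pt y" unfolding pt_def using cpos by simp
lemma po_zero: "norm (fst y) = 0 \<Longrightarrow> po y = 0" unfolding po_def by simp
lemma pt_zero: "norm (fst y) = 0 \<Longrightarrow> pt y = 0" unfolding pt_def by simp

lemma \<theta>_pos: "0 < t \<Longrightarrow> 0 < \<theta> t" unfolding \<theta>_def using cpos by simp

lemma \<theta>_less_iff: "0 < u \<Longrightarrow> 0 < t \<Longrightarrow> \<theta> u < \<theta> t \<longleftrightarrow> t < u"
  unfolding \<theta>_def using gkey[of c0 c0 a0 a0 u t] gf_self[of c0 a0 t] cpos by simp

lemma \<theta>_le_iff: assumes "0 < u" "0 < t" shows "\<theta> t \<le> \<theta> u \<longleftrightarrow> u \<le> t"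
  using \<theta>_less_iff[OF assms] by (simp add: not_less[symmetric])

lemma po_target: "snd z = b \<Longrightarrow> po z = \<theta> (norm (fst z))"
  unfolding po_def \<theta>_def by simp

lemma Lo_iff: assumes t: "0 < t" shows "y \<in> Lo t \<longleftrightarrow> 0 < norm (fst y) \<and> \<theta> t \<le> po y"
proof (cases "snd y = b")
  case True
  have "y \<in> Lo t \<longleftrightarrow> 0 < norm (fst y) \<and> norm (fst y) \<le> t" using True by (auto simp: Lo_def R_def)
  also have "\<dots> \<longleftrightarrow> 0 < norm (fst y) \<and> \<theta> t \<le> po y"
    using True \<theta>_le_iff[of "norm (fst y)" t] t by (auto simp: po_target)
  finally show ?thesis .
next
  case False
  have "y \<in> Lo t \<longleftrightarrow> 0 < norm (fst y) \<and> norm (fst y) \<le> g1 t" using False by (auto simp: Lo_def R_def)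
  also have "\<dots> \<longleftrightarrow> 0 < norm (fst y) \<and> \<theta> t \<le> po y"
  proof -
    have "0 < norm (fst y) \<Longrightarrow> (c1 * norm (fst y) powr (- a1) < c0 * t powr (- a0) \<longleftrightarrow> g1 t < norm (fst y))"
      unfolding g1_def using gkey[of c1 c0 a1 a0 "norm (fst y)" t] cpos t by simp
    then show ?thesis using False unfolding po_def \<theta>_def by (auto simp: not_less[symmetric])
  qed
  finally show ?thesis .
qed

lemma Lt_iff: assumes t: "0 < t" shows "y \<in> Lt t \<longleftrightarrow> 0 < norm (fst y) \<and> \<theta> t \<le> pt y"
proof (cases "snd y")
  case True
  have "y \<in> Lt t \<longleftrightarrow> 0 < norm (fst y) \<and> norm (fst y) \<le> g2 t" using True by (auto simp: Lt_def R_def)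
  also have "\<dots> \<longleftrightarrow> 0 < norm (fst y) \<and> \<theta> t \<le> pt y"
  proof -
    have "0 < norm (fst y) \<Longrightarrow> (c2 * norm (fst y) powr (- a2) < c0 * t powr (- a0) \<longleftrightarrow> g2 t < norm (fst y))"
      unfolding g2_def using gkey[of c2 c0 a2 a0 "norm (fst y)" t] cpos t by simp
    then show ?thesis using True unfolding pt_def \<theta>_def by (auto simp: not_less[symmetric])
  qed
  finally show ?thesis .
next
  case False
  have "y \<in> Lt t \<longleftrightarrow> 0 < norm (fst y) \<and> norm (fst y) \<le> g3 t" using False by (auto simp: Lt_def R_def)
  also have "\<dots> \<longleftrightarrow> 0 < norm (fst y) \<and> \<theta> t \<le> pt y"
  proof -
    have "0 < norm (fst y) \<Longrightarrow> (c3 * norm (fst y) powr (- a3) < c0 * t powr (- a0) \<longleftrightarrow> g3 t < norm (fst y))"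
      unfolding g3_def using gkey[of c3 c0 a3 a0 "norm (fst y)" t] cpos t by simp
    then show ?thesis using False unfolding pt_def \<theta>_def by (auto simp: not_less[symmetric])
  qed
  finally show ?thesis .
qed

lemma fin_o: "\<omega> \<in> space M \<Longrightarrow> finite (\<Psi>o \<omega> \<inter> R \<beta> a c)"
  using lf_finite[OF conjunct1[OF lf] R_bounded] by blast
lemma fin_t: "\<omega> \<in> space M \<Longrightarrow> finite (\<Psi>t \<omega> \<inter> R \<beta> a c)"
  using lf_finite[OF conjunct2[OF lf] R_bounded] by blast

lemma cnt0_o: "\<omega> \<in> space M \<Longrightarrow> cnt \<Psi>o (R \<beta> a c) \<omega> = 0 \<longleftrightarrow> \<Psi>o \<omega> \<inter> R \<beta> a c = {}"
  unfolding cnt_def using fin_o by auto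
lemma cnt0_t: "\<omega> \<in> space M \<Longrightarrow> cnt \<Psi>t (R \<beta> a c) \<omega> = 0 \<longleftrightarrow> \<Psi>t \<omega> \<inter> R \<beta> a c = {}"
  unfolding cnt_def using fin_t by auto
lemma cnt1_o: "cnt \<Psi>o (R \<beta> a c) \<omega> = 1 \<longleftrightarrow> (\<exists>z. \<Psi>o \<omega> \<inter> R \<beta> a c = {z})"
  unfolding cnt_def using card_1_singleton_iff[of "\<Psi>o \<omega> \<inter> R \<beta> a c"] by (simp only: One_nat_def)

lemma g_zero: "g1 0 = 0" "g2 0 = 0" "g3 0 = 0"
  unfolding g1_def g2_def g3_def using gf_zero cpos by auto
lemma g_nonneg: "0 \<le> g1 t" "0 \<le> g2 t" "0 \<le> g3 t"
  unfolding g1_def g2_def g3_def using gf_nonneg by auto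
lemma g_mono: "0 \<le> s \<Longrightarrow> s \<le> t \<Longrightarrow> g1 s \<le> g1 t \<and> g2 s \<le> g2 t \<and> g3 s \<le> g3 t"
  unfolding g1_def g2_def g3_def using gf_mono cpos by auto

end




lemma pois0: "pois m 0 = exp (- m)" unfolding pois_def by simp
lemma pois1: "pois m 1 = m * exp (- m)" unfolding pois_def by simp

lemma exp5: "exp (- (m0 + m1 + m2 + m3 + m4)) = exp (- m0) * exp (- m1) * exp (- m2) * exp (- m3) * exp (- (m4::real))"
  by (simp only: minus_add_distrib exp_add)

lemma pois_prod5: "pois m0 0 * pois m1 1 * pois m2 0 * pois m3 0 * pois m4 0 = m1 * exp (- (m0 + m1 + m2 + m3 + m4))"
  unfolding exp5 unfolding pois_def by (simp add: mult_ac)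

lemma pois_prod5z: "pois m0 0 * pois m1 0 * pois m2 0 * pois m3 0 * pois m4 0 = exp (- (m0 + m1 + m2 + m3 + m4))"
  unfolding exp5 unfolding pois_def by (simp add: mult_ac)

context scen begin

abbreviation "\<mu>o \<equiv> marked_intensity lo qo"
abbreviation "\<mu>t \<equiv> marked_intensity lt qt"
abbreviation "W0 \<equiv> W lo qo b"
abbreviation "W1 \<equiv> W lo qo (\<not> b)"
abbreviation "W2 \<equiv> W lt qt True"
abbreviation "W3 \<equiv> W lt qt False"

definition Mf :: "real \<Rightarrow> real" where
  "Mf t = W0 t + W1 (g1 t) + W2 (g2 t) + W3 (g3 t)"

lemma W_zero: "W l q \<beta> 0 = 0" unfolding W_def by (rule set_int_zero)

lemma fin_o_R: "0 \<le> a \<Longrightarrow> emeasure \<mu>o (R \<beta> a c) < \<infinity>"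
proof (cases "a \<le> c")
  case True assume "0 \<le> a" then show ?thesis using To.region_measure(1) True by blast
next
  case False then have "R \<beta> a c = {}" unfolding R_def by auto
  then show ?thesis by simp
qed

lemma fin_t_R: "0 \<le> a \<Longrightarrow> emeasure \<mu>t (R \<beta> a c) < \<infinity>"
proof (cases "a \<le> c")
  case True assume "0 \<le> a" then show ?thesis using Tt.region_measure(1) True by blast
next
  case False then have "R \<beta> a c = {}" unfolding R_def by auto
  then show ?thesis by simp
qed

lemma fin_o_R': "0 \<le> a \<Longrightarrow> emeasure \<mu>o (R \<beta> a c) < \<top>"
  using fin_o_R by simp
lemma fin_t_R': "0 \<le> a \<Longrightarrow> emeasure \<mu>t (R \<beta> a c) < \<top>"
  using fin_t_R by simp

lemma sets_o: "0 \<le> a \<Longrightarrow> {\<omega>\<in>space M. cnt \<Psi>o (R \<beta> a c) \<omega> = k} \<in> sets M"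
  using ppp
proof
  assume "0 \<le> a" "two_tier_marked_ppp M \<Psi>o \<mu>o \<Psi>t \<mu>t"
  then show ?thesis using ppp_cnt_sets(1)[of M \<Psi>o \<mu>o \<Psi>t \<mu>t "R \<beta> a c" "{}"] R_sets fin_o_R by auto
next
  assume "0 \<le> a" "two_tier_marked_ppp M \<Psi>t \<mu>t \<Psi>o \<mu>o"
  then show ?thesis using ppp_cnt_sets(2)[of M \<Psi>t \<mu>t \<Psi>o \<mu>o "{}" "R \<beta> a c"] R_sets fin_o_R by auto
qed

lemma sets_t: "0 \<le> a \<Longrightarrow> {\<omega>\<in>space M. cnt \<Psi>t (R \<beta> a c) \<omega> = k} \<in> sets M"
  using ppp
proof
  assume "0 \<le> a" "two_tier_marked_ppp M \<Psi>o \<mu>o \<Psi>t \<mu>t"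
  then show ?thesis using ppp_cnt_sets(2)[of M \<Psi>o \<mu>o \<Psi>t \<mu>t "{}" "R \<beta> a c"] R_sets fin_t_R by auto
next
  assume "0 \<le> a" "two_tier_marked_ppp M \<Psi>t \<mu>t \<Psi>o \<mu>o"
  then show ?thesis using ppp_cnt_sets(1)[of M \<Psi>t \<mu>t \<Psi>o \<mu>o "R \<beta> a c" "{}"] R_sets fin_t_R by auto
qed

lemma prob5:
  assumes dA: "A0 \<inter> A1 = {}" "A0 \<inter> A2 = {}" "A1 \<inter> A2 = {}" and dB: "B0 \<inter> B1 = {}"
    and A: "\<And>A. A \<in> {A0,A1,A2} \<Longrightarrow> A \<in> sets mark_space \<and> emeasure \<mu>o A < \<infinity>"
    and B: "\<And>B. B \<in> {B0,B1} \<Longrightarrow> B \<in> sets mark_space \<and> emeasure \<mu>t B < \<infinity>"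
  shows "measure M {\<omega>\<in>space M. cnt \<Psi>o A0 \<omega> = x0 \<and> cnt \<Psi>o A1 \<omega> = x1 \<and> cnt \<Psi>o A2 \<omega> = x2 \<and> cnt \<Psi>t B0 \<omega> = y0 \<and> cnt \<Psi>t B1 \<omega> = y1}
    = pois (measure \<mu>o A0) x0 * pois (measure \<mu>o A1) x1 * pois (measure \<mu>o A2) x2 * pois (measure \<mu>t B0) y0 * pois (measure \<mu>t B1) y1"
  using ppp
proof
  assume p: "two_tier_marked_ppp M \<Psi>o \<mu>o \<Psi>t \<mu>t"
  show ?thesis by (rule prob5_gen[OF p dA dB A B])
next
  assume p: "two_tier_marked_ppp M \<Psi>t \<mu>t \<Psi>o \<mu>o"
  show ?thesis by (rule prob5_gen'[OF p dA dB A B])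
qed

definition F :: "real \<Rightarrow> real \<Rightarrow> 'a set" where
  "F s t = {\<omega>\<in>space M. cnt \<Psi>o (R b 0 s) \<omega> = 0 \<and> cnt \<Psi>o (R b s t) \<omega> = 1 \<and> cnt \<Psi>o (R (\<not> b) 0 (g1 t)) \<omega> = 0
      \<and> cnt \<Psi>t (R True 0 (g2 t)) \<omega> = 0 \<and> cnt \<Psi>t (R False 0 (g3 t)) \<omega> = 0}"

definition Zr :: "real \<Rightarrow> real \<Rightarrow> 'a set" where
  "Zr s t = {\<omega>\<in>space M. cnt \<Psi>o (R b 0 s) \<omega> = 0 \<and> cnt \<Psi>o (R b s t) \<omega> = 0 \<and> cnt \<Psi>o (R (\<not> b) 0 (g1 s)) \<omega> = 0
      \<and> cnt \<Psi>t (R True 0 (g2 s)) \<omega> = 0 \<and> cnt \<Psi>t (R False 0 (g3 s)) \<omega> = 0}"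

lemma disjR: "R b x y \<inter> R (\<not> b) x' y' = {}" "R True x y \<inter> R False x' y' = {}" "R \<beta> 0 s \<inter> R \<beta> s t = {}"
  unfolding R_def by auto

lemma A_ok: "0 \<le> a \<Longrightarrow> R \<beta> a c \<in> sets mark_space \<and> emeasure \<mu>o (R \<beta> a c) < \<infinity>"
  using R_sets fin_o_R by blast
lemma B_ok: "0 \<le> a \<Longrightarrow> R \<beta> a c \<in> sets mark_space \<and> emeasure \<mu>t (R \<beta> a c) < \<infinity>"
  using R_sets fin_t_R by blast

lemma measR_o: "0 \<le> a \<Longrightarrow> a \<le> c \<Longrightarrow> measure \<mu>o (R \<beta> a c) = W lo qo \<beta> c - W lo qo \<beta> a"
  by (rule To.region_measure(2))
lemma measR_t: "0 \<le> a \<Longrightarrow> a \<le> c \<Longrightarrow> measure \<mu>t (R \<beta> a c) = W lt qt \<beta> c - W lt qt \<beta> a"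
  by (rule Tt.region_measure(2))

lemma prob_F: assumes st: "0 \<le> s" "s \<le> t"
  shows "measure M (F s t) = (W0 t - W0 s) * exp (- Mf t)"
proof -
  have "measure M (F s t) = pois (measure \<mu>o (R b 0 s)) 0 * pois (measure \<mu>o (R b s t)) 1 * pois (measure \<mu>o (R (\<not> b) 0 (g1 t))) 0
      * pois (measure \<mu>t (R True 0 (g2 t))) 0 * pois (measure \<mu>t (R False 0 (g3 t))) 0"
    unfolding F_def by (rule prob5) (use st in \<open>auto simp: disjR R_sets intro!: fin_o_R' fin_t_R'\<close>)
  also have "\<dots> = (W0 t - W0 s) * exp (- Mf t)"
    using st g_nonneg unfolding pois_prod5 by (simp add: measR_o measR_t W_zero Mf_def)
  finally show ?thesis .
qed

end




lemma exists_interval: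
  fixes T r :: real and n :: nat
  assumes T: "0 < T" and n: "0 < n" and r: "0 < r" "r \<le> T"
  shows "\<exists>j<n. real j * T / real n < r \<and> r \<le> real (Suc j) * T / real n"
proof -
  define x where "x = r * real n / T"
  have x0: "0 < x" using T n r unfolding x_def by simp
  have xn: "x \<le> real n" using T n r unfolding x_def by (simp add: field_simps)
  define k where "k = nat \<lceil>x\<rceil>"
  have k1: "1 \<le> k" using x0 unfolding k_def by linarith
  have kn: "k \<le> n" using xn unfolding k_def by (simp add: nat_le_iff ceiling_le_iff)
  have kx: "real k - 1 < x" "x \<le> real k" using x0 unfolding k_def by linarith+
  define j where "j = k - 1"
  have jk: "real j = real k - 1" "real (Suc j) = real k" using k1 unfolding j_def by auto
  have "real j * T / real n < r" using kx(1) T n unfolding x_def jk by (simp add: field_simps)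
  moreover have "r \<le> real (Suc j) * T / real n" using kx(2) T n unfolding x_def jk by (simp add: field_simps)
  moreover have "j < n" using k1 kn unfolding j_def by simp
  ultimately show ?thesis by blast
qed

context scen begin

lemma prob_Zr: assumes st: "0 \<le> s" "s \<le> t"
  shows "measure M (Zr s t) = exp (- (W0 t + W1 (g1 s) + W2 (g2 s) + W3 (g3 s)))"
proof -
  have "measure M (Zr s t) = pois (measure \<mu>o (R b 0 s)) 0 * pois (measure \<mu>o (R b s t)) 0 * pois (measure \<mu>o (R (\<not> b) 0 (g1 s))) 0
      * pois (measure \<mu>t (R True 0 (g2 s))) 0 * pois (measure \<mu>t (R False 0 (g3 s))) 0"
    unfolding Zr_def by (rule prob5) (use st in \<open>auto simp: disjR R_sets intro!: fin_o_R' fin_t_R'\<close>)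
  also have "\<dots> = exp (- (W0 t + W1 (g1 s) + W2 (g2 s) + W3 (g3 s)))"
    using st g_nonneg unfolding pois_prod5z by (simp add: measR_o measR_t W_zero)
  finally show ?thesis .
qed

lemma prob_Z: "0 \<le> s \<Longrightarrow> measure M (Zr s s) = exp (- Mf s)"
  using prob_Zr[of s s] unfolding Mf_def by simp

definition E :: "'a set" where "E = serving_event M \<Psi>o po \<Psi>t pt b"

lemma E_def': "E = {\<omega> \<in> space M. \<exists>x. (x, b) \<in> \<Psi>o \<omega> \<and>
        (\<forall>y \<in> \<Psi>o \<omega>. y \<noteq> (x, b) \<longrightarrow> po y < po (x, b)) \<and> (\<forall>y \<in> \<Psi>t \<omega>. pt y < po (x, b))}"
  unfolding E_def serving_event_def ..

lemma Lo_split: "0 \<le> s \<Longrightarrow> s \<le> t \<Longrightarrow> Lo t = R b 0 s \<union> R b s t \<union> R (\<not> b) 0 (g1 t)"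
  unfolding Lo_def R_def by auto

lemma Lo_zero: "Lo 0 = {}" and Lt_zero: "Lt 0 = {}"
  unfolding Lo_def Lt_def R_def using g_zero by auto

lemma F_sub_E: assumes st: "0 \<le> s" "s < t" shows "F s t \<subseteq> E"
proof
  fix \<omega> assume w: "\<omega> \<in> F s t"
  then have sp: "\<omega> \<in> space M" unfolding F_def by simp
  from w obtain z where z: "\<Psi>o \<omega> \<inter> R b s t = {z}" unfolding F_def cnt1_o by auto
  have e1: "\<Psi>o \<omega> \<inter> R b 0 s = {}" "\<Psi>o \<omega> \<inter> R (\<not> b) 0 (g1 t) = {}"
    "\<Psi>t \<omega> \<inter> R True 0 (g2 t) = {}" "\<Psi>t \<omega> \<inter> R False 0 (g3 t) = {}"
    using w sp unfolding F_def by (auto simp: cnt0_o cnt0_t)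
  have t0: "0 < t" using st by simp
  have Lo1: "\<Psi>o \<omega> \<inter> Lo t = {z}" using z e1 Lo_split[of s t] st by auto
  have Lt0: "\<Psi>t \<omega> \<inter> Lt t = {}" using e1 unfolding Lt_def by auto
  have zR: "z \<in> R b s t" "z \<in> \<Psi>o \<omega>" using z by auto
  then have zb: "z = (fst z, b)" and zn: "s < norm (fst z)" "norm (fst z) \<le> t" unfolding R_def by (auto simp: prod_eq_iff)
  have zpos: "0 < norm (fst z)" by (rule le_less_trans[OF st(1) zn(1)])
  have P: "po z = \<theta> (norm (fst z))" by (rule po_target) (use zR in \<open>simp add: R_def\<close>)
  have Pt: "\<theta> t \<le> po z" unfolding P using \<theta>_le_iff[OF zpos t0] zn by simp
  have Ppos: "0 < po z" unfolding P using \<theta>_pos[OF zpos] .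
  show "\<omega> \<in> E" unfolding E_def'
  proof (intro CollectI conjI exI[of _ "fst z"] ballI impI sp)
    show "(fst z, b) \<in> \<Psi>o \<omega>" using zR zb by simp
    fix y assume y: "y \<in> \<Psi>o \<omega>" "y \<noteq> (fst z, b)"
    show "po y < po (fst z, b)"
    proof (cases "norm (fst y) = 0")
      case True then show ?thesis using po_zero Ppos zb by auto
    next
      case False
      have "y \<notin> Lo t" using Lo1 y zb by auto
      then have "po y < \<theta> t" using Lo_iff[OF t0, of y] False by auto
      then show ?thesis using Pt zb by auto
    qed
  next
    fix y assume y: "y \<in> \<Psi>t \<omega>"
    show "pt y < po (fst z, b)"
    proof (cases "norm (fst y) = 0")
      case True then show ?thesis using pt_zero Ppos zb by auto
    next
      case False
      have "y \<notin> Lt t" using Lt0 y by auto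
      then have "pt y < \<theta> t" using Lt_iff[OF t0, of y] False by auto
      then show ?thesis using Pt zb by auto
    qed
  qed
qed

lemma E_empty_below:
  assumes w: "\<omega> \<in> space M" and x: "(x, b) \<in> \<Psi>o \<omega>"
    and hx: "\<forall>y \<in> \<Psi>o \<omega>. y \<noteq> (x, b) \<longrightarrow> po y < po (x, b)" "\<forall>y \<in> \<Psi>t \<omega>. pt y < po (x, b)"
    and t: "0 \<le> t" and c: "norm x = 0 \<or> t < norm x"
  shows "\<Psi>o \<omega> \<inter> Lo t = {} \<and> \<Psi>t \<omega> \<inter> Lt t = {}"
proof (cases "t = 0")
  case True then show ?thesis by (simp add: Lo_zero Lt_zero)
next
  case False
  then have t0: "0 < t" using t by simp
  have key: "po (x, b) < \<theta> t"
  proof (cases "norm x = 0")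
    case True then show ?thesis using po_zero[of "(x,b)"] \<theta>_pos[OF t0] by simp
  next
    case False
    then have "t < norm x" "0 < norm x" using c by auto
    then show ?thesis using \<theta>_less_iff[of "norm x" t] t0 by (simp add: po_target)
  qed
  have A: "\<Psi>o \<omega> \<inter> Lo t = {}"
  proof (rule ccontr)
    assume "\<Psi>o \<omega> \<inter> Lo t \<noteq> {}"
    then obtain y where y: "y \<in> \<Psi>o \<omega>" "y \<in> Lo t" by auto
    then have yy: "0 < norm (fst y)" "\<theta> t \<le> po y" using Lo_iff[OF t0] by auto
    show False
    proof (cases "y = (x, b)")
      case True then show ?thesis using yy key by simp
    next
      case False then have "po y < po (x, b)" using hx y by auto
      then show ?thesis using yy key by simp
    qed
  qed
  have B: "\<Psi>t \<omega> \<inter> Lt t = {}"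
  proof (rule ccontr)
    assume "\<Psi>t \<omega> \<inter> Lt t \<noteq> {}"
    then obtain y where y: "y \<in> \<Psi>t \<omega>" "y \<in> Lt t" by auto
    then have yy: "\<theta> t \<le> pt y" using Lt_iff[OF t0] by auto
    have "pt y < po (x, b)" using hx y by auto
    then show False using yy key by simp
  qed
  show ?thesis using A B by simp
qed

lemma Zr_of_empty:
  assumes w: "\<omega> \<in> space M" and s: "0 \<le> s" and e: "\<Psi>o \<omega> \<inter> Lo s = {} \<and> \<Psi>t \<omega> \<inter> Lt s = {}"
  shows "\<omega> \<in> Zr s s"
proof -
  have "R b s s = {}" unfolding R_def by auto
  moreover have "\<Psi>o \<omega> \<inter> R b 0 s = {}" "\<Psi>o \<omega> \<inter> R (\<not> b) 0 (g1 s) = {}"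
    "\<Psi>t \<omega> \<inter> R True 0 (g2 s) = {}" "\<Psi>t \<omega> \<inter> R False 0 (g3 s) = {}"
    using e unfolding Lo_def Lt_def by auto
  ultimately show ?thesis unfolding Zr_def using w by (simp add: cnt0_o cnt0_t cnt_def)
qed

lemma E_cover:
  assumes T: "0 < T" and n: "0 < n"
  shows "E \<subseteq> (\<Union>j<n. Zr (real j * T / real n) (real j * T / real n) - Zr (real j * T / real n) (real (Suc j) * T / real n)) \<union> Zr T T"
proof
  fix \<omega> assume "\<omega> \<in> E"
  then obtain x where w: "\<omega> \<in> space M" and x: "(x, b) \<in> \<Psi>o \<omega>"
    and hx: "\<forall>y \<in> \<Psi>o \<omega>. y \<noteq> (x, b) \<longrightarrow> po y < po (x, b)" "\<forall>y \<in> \<Psi>t \<omega>. pt y < po (x, b)"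
    unfolding E_def' by blast
  show "\<omega> \<in> (\<Union>j<n. Zr (real j * T / real n) (real j * T / real n) - Zr (real j * T / real n) (real (Suc j) * T / real n)) \<union> Zr T T"
  proof (cases "norm x = 0 \<or> T < norm x")
    case True
    then have "\<omega> \<in> Zr T T" using Zr_of_empty[OF w] E_empty_below[OF w x hx] T by simp
    then show ?thesis by simp
  next
    case False
    then have r: "0 < norm x" "norm x \<le> T" by auto
    obtain j where j: "j < n" "real j * T / real n < norm x" "norm x \<le> real (Suc j) * T / real n"
      using exists_interval[OF T n r] by blast
    define s where "s = real j * T / real n"
    define t where "t = real (Suc j) * T / real n"
    have s0: "0 \<le> s" unfolding s_def using T by simp
    have "\<omega> \<in> Zr s s" using Zr_of_empty[OF w s0] E_empty_below[OF w x hx s0] j(2) unfolding s_def by simp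
    moreover have "\<omega> \<notin> Zr s t"
    proof
      assume "\<omega> \<in> Zr s t"
      then have "\<Psi>o \<omega> \<inter> R b s t = {}" unfolding Zr_def using cnt0_o by auto
      moreover have "(x, b) \<in> R b s t" unfolding R_def s_def t_def using j by simp
      ultimately show False using x by auto
    qed
    ultimately show ?thesis using j(1) unfolding s_def t_def by blast
  qed
qed

end




context tier begin

lemma D_fin: "emeasure (marked_intensity lam q) {z::pt\<times>bool. norm (fst z) \<le> c} < \<infinity>"
proof -
  let ?D = "{z::pt\<times>bool. norm (fst z) \<le> c}"
  have "emeasure (marked_intensity lam q) ?D =
     (\<integral>\<^sup>+x. dens lam q (x,True) * indicator ?D (x,True) + dens lam q (x,False) * indicator ?D (x,False) \<partial>lborel)"
    by (rule marked_emeasure[OF qm D_sets])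
  also have "\<dots> \<le> (\<integral>\<^sup>+x. ennreal (2 * lam) * indicator (cball (0::pt) c) x \<partial>lborel)"
  proof (rule nn_integral_mono)
    fix x :: pt
    have d: "dens lam q (x, \<beta>) \<le> ennreal lam" for \<beta>
    proof -
      have "lam * (if \<beta> then q (norm x) else 1 - q (norm x)) \<le> lam * 1"
        using qr[of "norm x"] lam by (intro mult_left_mono) auto
      then show ?thesis unfolding dens_def by (auto intro!: ennreal_leI)
    qed
    show "dens lam q (x,True) * indicator ?D (x,True) + dens lam q (x,False) * indicator ?D (x,False)
        \<le> ennreal (2 * lam) * indicator (cball 0 c) x"
    proof (cases "norm x \<le> c")
      case True
      have "dens lam q (x,True) + dens lam q (x,False) \<le> ennreal lam + ennreal lam"
        by (intro add_mono d)
      also have "\<dots> = ennreal (2 * lam)" using lam by (simp add: ennreal_plus[symmetric])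
      finally show ?thesis using True by (simp add: indicator_def dist_norm)
    next
      case False then show ?thesis by (simp add: indicator_def dist_norm)
    qed
  qed
  also have "\<dots> = ennreal (2 * lam) * emeasure lborel (cball (0::pt) c)"
    by (rule nn_integral_cmult_indicator) simp
  also have "\<dots> < \<infinity>"
    using emeasure_compact_finite[OF compact_cball[of "0::pt" c]] by (simp add: ennreal_mult_less_top)
  finally show ?thesis .
qed

end

lemma sets_mi[simp]: "sets (marked_intensity lam q) = sets mark_space"
  unfolding marked_intensity_def by simp

context scen begin

lemma sets_o_gen: "A \<in> sets mark_space \<Longrightarrow> emeasure \<mu>o A < \<infinity> \<Longrightarrow> {\<omega>\<in>space M. cnt \<Psi>o A \<omega> = k} \<in> sets M"
  using ppp
proof
  assume "A \<in> sets mark_space" "emeasure \<mu>o A < \<infinity>" "two_tier_marked_ppp M \<Psi>o \<mu>o \<Psi>t \<mu>t"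
  then show ?thesis using ppp_cnt_sets(1)[of M \<Psi>o \<mu>o \<Psi>t \<mu>t A "{}"] by auto
next
  assume "A \<in> sets mark_space" "emeasure \<mu>o A < \<infinity>" "two_tier_marked_ppp M \<Psi>t \<mu>t \<Psi>o \<mu>o"
  then show ?thesis using ppp_cnt_sets(2)[of M \<Psi>t \<mu>t \<Psi>o \<mu>o "{}" A] by auto
qed

lemma sets_t_gen: "A \<in> sets mark_space \<Longrightarrow> emeasure \<mu>t A < \<infinity> \<Longrightarrow> {\<omega>\<in>space M. cnt \<Psi>t A \<omega> = k} \<in> sets M"
  using ppp
proof
  assume "A \<in> sets mark_space" "emeasure \<mu>t A < \<infinity>" "two_tier_marked_ppp M \<Psi>o \<mu>o \<Psi>t \<mu>t"
  then show ?thesis using ppp_cnt_sets(2)[of M \<Psi>o \<mu>o \<Psi>t \<mu>t "{}" A] by auto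
next
  assume "A \<in> sets mark_space" "emeasure \<mu>t A < \<infinity>" "two_tier_marked_ppp M \<Psi>t \<mu>t \<Psi>o \<mu>o"
  then show ?thesis using ppp_cnt_sets(1)[of M \<Psi>t \<mu>t \<Psi>o \<mu>o A "{}"] by auto
qed

lemma F_sets: "0 \<le> s \<Longrightarrow> F s t \<in> sets M"
proof -
  assume s: "0 \<le> s"
  have "F s t = {\<omega>\<in>space M. cnt \<Psi>o (R b 0 s) \<omega> = 0} \<inter> {\<omega>\<in>space M. cnt \<Psi>o (R b s t) \<omega> = 1}
     \<inter> {\<omega>\<in>space M. cnt \<Psi>o (R (\<not> b) 0 (g1 t)) \<omega> = 0} \<inter> {\<omega>\<in>space M. cnt \<Psi>t (R True 0 (g2 t)) \<omega> = 0}
     \<inter> {\<omega>\<in>space M. cnt \<Psi>t (R False 0 (g3 t)) \<omega> = 0}" unfolding F_def by auto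
  also have "\<dots> \<in> sets M" using s by (intro sets.Int sets_o sets_t) auto
  finally show ?thesis .
qed

lemma Zr_sets: "0 \<le> s \<Longrightarrow> Zr s t \<in> sets M"
proof -
  assume s: "0 \<le> s"
  have "Zr s t = {\<omega>\<in>space M. cnt \<Psi>o (R b 0 s) \<omega> = 0} \<inter> {\<omega>\<in>space M. cnt \<Psi>o (R b s t) \<omega> = 0}
     \<inter> {\<omega>\<in>space M. cnt \<Psi>o (R (\<not> b) 0 (g1 s)) \<omega> = 0} \<inter> {\<omega>\<in>space M. cnt \<Psi>t (R True 0 (g2 s)) \<omega> = 0}
     \<inter> {\<omega>\<in>space M. cnt \<Psi>t (R False 0 (g3 s)) \<omega> = 0}" unfolding Zr_def by auto
  also have "\<dots> \<in> sets M" using s by (intro sets.Int sets_o sets_t) auto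
  finally show ?thesis .
qed

definition Dn :: "nat \<Rightarrow> (pt \<times> bool) set" where "Dn N = {z. norm (fst z) \<le> real N}"

definition Z0 :: "'a set" where "Z0 = {\<omega>\<in>space M. \<Psi>o \<omega> = {(0, b)} \<and> \<Psi>t \<omega> = {}}"

lemma single_sets: "{(0::pt, b)} \<in> sets mark_space"
proof -
  have "{(0::pt, b)} = {0} \<times> {b}" by simp
  also have "\<dots> \<in> sets mark_space" unfolding mark_space_def by (intro pair_measureI) auto
  finally show ?thesis .
qed

lemma Z0_sets: "Z0 \<in> sets M"
proof -
  have fo: "finite (\<Psi>o \<omega> \<inter> A)" if "\<omega> \<in> space M" "A \<subseteq> Dn N" for \<omega> A N
    using lf_finite[OF conjunct1[OF lf[OF that(1)]], of A "real N"] that(2) unfolding Dn_def by blast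
  have ft: "finite (\<Psi>t \<omega> \<inter> A)" if "\<omega> \<in> space M" "A \<subseteq> Dn N" for \<omega> A N
    using lf_finite[OF conjunct2[OF lf[OF that(1)]], of A "real N"] that(2) unfolding Dn_def by blast
  have inD: "\<exists>N. y \<in> Dn N" for y
  proof -
    obtain N :: nat where "norm (fst y) \<le> real N" using real_arch_simple by blast
    then show ?thesis unfolding Dn_def by auto
  qed
  have "Z0 = {\<omega>\<in>space M. cnt \<Psi>o {(0,b)} \<omega> = 1} \<inter> (\<Inter>N. {\<omega>\<in>space M. cnt \<Psi>o (Dn N - {(0,b)}) \<omega> = 0})
      \<inter> (\<Inter>N. {\<omega>\<in>space M. cnt \<Psi>t (Dn N) \<omega> = 0})"
  proof (intro equalityI subsetI)
    fix \<omega> assume "\<omega> \<in> Z0"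
    then show "\<omega> \<in> {\<omega>\<in>space M. cnt \<Psi>o {(0,b)} \<omega> = 1} \<inter> (\<Inter>N. {\<omega>\<in>space M. cnt \<Psi>o (Dn N - {(0,b)}) \<omega> = 0})
      \<inter> (\<Inter>N. {\<omega>\<in>space M. cnt \<Psi>t (Dn N) \<omega> = 0})" unfolding Z0_def cnt_def by auto
  next
    fix \<omega> assume w: "\<omega> \<in> {\<omega>\<in>space M. cnt \<Psi>o {(0,b)} \<omega> = 1} \<inter> (\<Inter>N. {\<omega>\<in>space M. cnt \<Psi>o (Dn N - {(0,b)}) \<omega> = 0})
      \<inter> (\<Inter>N. {\<omega>\<in>space M. cnt \<Psi>t (Dn N) \<omega> = 0})"
    then have sp: "\<omega> \<in> space M" by auto
    have c1: "card (\<Psi>o \<omega> \<inter> {(0,b)}) = 1" using w unfolding cnt_def by auto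
    then have in0: "(0, b) \<in> \<Psi>o \<omega>" by (cases "(0, b) \<in> \<Psi>o \<omega>") auto
    have o: "\<Psi>o \<omega> = {(0, b)}"
    proof (intro equalityI subsetI)
      fix y assume y: "y \<in> \<Psi>o \<omega>"
      show "y \<in> {(0, b)}"
      proof (rule ccontr)
        assume ny: "y \<notin> {(0, b)}"
        obtain N where N: "y \<in> Dn N" using inD by blast
        have "finite (\<Psi>o \<omega> \<inter> (Dn N - {(0,b)}))" by (rule fo[OF sp]) auto
        moreover have "y \<in> \<Psi>o \<omega> \<inter> (Dn N - {(0,b)})" using y ny N by auto
        ultimately have "card (\<Psi>o \<omega> \<inter> (Dn N - {(0,b)})) \<noteq> 0" by (auto simp: card_eq_0_iff)
        then show False using w unfolding cnt_def by auto
      qed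
    qed (use in0 in auto)
    have t: "\<Psi>t \<omega> = {}"
    proof (rule ccontr)
      assume "\<Psi>t \<omega> \<noteq> {}"
      then obtain y where y: "y \<in> \<Psi>t \<omega>" by auto
      obtain N where N: "y \<in> Dn N" using inD by blast
      have "finite (\<Psi>t \<omega> \<inter> Dn N)" by (rule ft[OF sp]) auto
      moreover have "y \<in> \<Psi>t \<omega> \<inter> Dn N" using y N by auto
      ultimately have "card (\<Psi>t \<omega> \<inter> Dn N) \<noteq> 0" by (auto simp: card_eq_0_iff)
      then show False using w unfolding cnt_def by auto
    qed
    show "\<omega> \<in> Z0" unfolding Z0_def using sp o t by simp
  qed
  also have "\<dots> \<in> sets M"
  proof -
    have Dm: "Dn N \<in> sets mark_space" for N unfolding Dn_def by (rule D_sets)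
    have Dfo: "emeasure \<mu>o (Dn N) < \<infinity>" for N unfolding Dn_def by (rule To.D_fin)
    have Dft: "emeasure \<mu>t (Dn N) < \<infinity>" for N unfolding Dn_def by (rule Tt.D_fin)
    have m1: "{\<omega>\<in>space M. cnt \<Psi>o {(0,b)} \<omega> = 1} \<in> sets M"
    proof (rule sets_o_gen[OF single_sets])
      show "emeasure \<mu>o {(0::pt, b)} < \<infinity>"
      proof (rule le_less_trans[OF emeasure_mono Dfo[of 0]])
        show "{(0::pt, b)} \<subseteq> Dn 0" unfolding Dn_def by simp
        show "Dn 0 \<in> sets \<mu>o" using Dm[of 0] by simp
      qed
    qed
    have m2: "{\<omega>\<in>space M. cnt \<Psi>o (Dn N - {(0,b)}) \<omega> = 0} \<in> sets M" for N
    proof (rule sets_o_gen)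
      show "Dn N - {(0, b)} \<in> sets mark_space" using Dm single_sets by auto
      show "emeasure \<mu>o (Dn N - {(0, b)}) < \<infinity>"
      proof (rule le_less_trans[OF emeasure_mono Dfo[of N]])
        show "Dn N - {(0::pt, b)} \<subseteq> Dn N" by auto
        show "Dn N \<in> sets \<mu>o" using Dm[of N] by simp
      qed
    qed
    have m3: "{\<omega>\<in>space M. cnt \<Psi>t (Dn N) \<omega> = 0} \<in> sets M" for N
      by (rule sets_t_gen[OF Dm Dft])
    have "(\<Inter>N. {\<omega>\<in>space M. cnt \<Psi>o (Dn N - {(0,b)}) \<omega> = 0}) \<in> sets M"
      using m2 by (intro sets.countable_INT) auto
    moreover have "(\<Inter>N. {\<omega>\<in>space M. cnt \<Psi>t (Dn N) \<omega> = 0}) \<in> sets M"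
      using m3 by (intro sets.countable_INT) auto
    ultimately show ?thesis using m1 by (intro sets.Int) auto
  qed
  finally show ?thesis .
qed

end




context scen begin

lemma Z0_sub_E: "Z0 \<subseteq> E"
  unfolding Z0_def E_def' by auto

lemma Lo_fin: "\<omega> \<in> space M \<Longrightarrow> finite (\<Psi>o \<omega> \<inter> Lo t)"
  unfolding Lo_def using fin_o by (simp add: Int_Un_distrib)
lemma Lt_fin: "\<omega> \<in> space M \<Longrightarrow> finite (\<Psi>t \<omega> \<inter> Lt t)"
  unfolding Lt_def using fin_t by (simp add: Int_Un_distrib)

lemma \<theta>_inv: assumes q: "0 < q" shows "\<theta> ((c0 / q) powr (1 / a0)) = q" "0 < (c0 / q) powr (1 / a0)"
proof -
  have "((c0 / q) powr (1 / a0)) powr (- a0) = (c0 / q) powr (-1)"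
    using cpos q by (simp add: powr_powr)
  also have "\<dots> = q / c0" using cpos q by (simp add: powr_minus_divide)
  finally show "\<theta> ((c0 / q) powr (1 / a0)) = q" unfolding \<theta>_def using cpos by simp
  show "0 < (c0 / q) powr (1 / a0)" using cpos q by simp
qed

lemma E_sub_union: "E \<subseteq> (\<Union>t\<in>{t\<in>\<rat>. 0 < t}. F 0 t) \<union> Z0"
proof
  fix \<omega> assume "\<omega> \<in> E"
  then obtain x where w: "\<omega> \<in> space M" and x: "(x, b) \<in> \<Psi>o \<omega>"
    and hx: "\<forall>y \<in> \<Psi>o \<omega>. y \<noteq> (x, b) \<longrightarrow> po y < po (x, b)" "\<forall>y \<in> \<Psi>t \<omega>. pt y < po (x, b)"
    unfolding E_def' by blast
  show "\<omega> \<in> (\<Union>t\<in>{t\<in>\<rat>. 0 < t}. F 0 t) \<union> Z0"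
  proof (cases "norm x = 0")
    case True
    then have x0: "x = 0" by simp
    have P0: "po (x, b) = 0" using po_zero True by simp
    have "\<Psi>o \<omega> = {(0, b)}"
    proof (intro equalityI subsetI)
      fix y assume "y \<in> \<Psi>o \<omega>"
      then show "y \<in> {(0, b)}" using hx(1) P0 po_nonneg[of y] x0 by force
    qed (use x x0 in auto)
    moreover have "\<Psi>t \<omega> = {}"
    proof -
      { fix y assume "y \<in> \<Psi>t \<omega>"
        then have "pt y < 0" using hx(2) P0 by auto
        with pt_nonneg[of y] have False by simp }
      then show ?thesis by blast
    qed
    ultimately show ?thesis unfolding Z0_def using w by simp
  next
    case False
    define r where "r = norm x"
    have r0: "0 < r" using False unfolding r_def by simp
    define z where "z = (x, b)"
    have Pz: "po z = \<theta> r" unfolding z_def r_def by (simp add: po_target)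
    define So where "So = \<Psi>o \<omega> \<inter> Lo (r + 1) - {z}"
    define St where "St = \<Psi>t \<omega> \<inter> Lt (r + 1)"
    define Q where "Q = insert (\<theta> (r + 1)) (po ` So \<union> pt ` St)"
    have finQ: "finite Q" unfolding Q_def So_def St_def using Lo_fin[OF w] Lt_fin[OF w] by auto
    define q where "q = Max Q"
    have Qall: "\<forall>a\<in>Q. a < \<theta> r"
    proof
      fix a assume "a \<in> Q"
      then consider "a = \<theta> (r + 1)" | y where "y \<in> So" "a = po y" | y where "y \<in> St" "a = pt y"
        unfolding Q_def by auto
      then show "a < \<theta> r"
      proof cases
        case 1 then show ?thesis using \<theta>_less_iff[of "r+1" r] r0 by simp
      next
        case 2 then show ?thesis using hx(1) Pz unfolding So_def z_def by auto
      next
        case 3 then show ?thesis using hx(2) Pz unfolding St_def z_def by auto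
      qed
    qed
    have qlt: "q < \<theta> r" unfolding q_def using finQ Qall by (subst Max_less_iff) (auto simp: Q_def)
    have qge: "\<theta> (r + 1) \<le> q" unfolding q_def using finQ by (intro Max_ge) (auto simp: Q_def)
    have q0: "0 < q" using qge \<theta>_pos[of "r+1"] r0 by simp
    define \<tau> where "\<tau> = (c0 / q) powr (1 / a0)"
    have \<tau>: "\<theta> \<tau> = q" "0 < \<tau>" unfolding \<tau>_def using \<theta>_inv[OF q0] by auto
    have r\<tau>: "r < \<tau>" using \<theta>_less_iff[of \<tau> r] \<tau> r0 qlt by simp
    obtain t where t: "t \<in> \<rat>" "r < t" "t < \<tau>" using Rats_dense_in_real[OF r\<tau>] by blast
    have t0: "0 < t" using t r0 by simp
    have qt: "q < \<theta> t" using \<theta>_less_iff[of \<tau> t] \<tau> t t0 by simp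
    have no_o: "y = z" if y: "y \<in> \<Psi>o \<omega>" "y \<in> Lo t" for y
    proof (rule ccontr)
      assume yz: "y \<noteq> z"
      have yy: "0 < norm (fst y)" "\<theta> t \<le> po y" using Lo_iff[OF t0] y by auto
      then have "\<theta> (r + 1) \<le> po y" using qge qt by simp
      then have "y \<in> Lo (r + 1)" using Lo_iff[of "r+1" y] r0 yy by simp
      then have "y \<in> So" unfolding So_def using y yz by simp
      then have "po y \<in> Q" unfolding Q_def by simp
      then have "po y \<le> q" unfolding q_def using finQ by (intro Max_ge) auto
      then show False using yy qt by simp
    qed
    have no_t: "False" if y: "y \<in> \<Psi>t \<omega>" "y \<in> Lt t" for y
    proof -
      have yy: "0 < norm (fst y)" "\<theta> t \<le> pt y" using Lt_iff[OF t0] y by auto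
      then have "\<theta> (r + 1) \<le> pt y" using qge qt by simp
      then have "y \<in> Lt (r + 1)" using Lt_iff[of "r+1" y] r0 yy by simp
      then have "y \<in> St" unfolding St_def using y by simp
      then have "pt y \<in> Q" unfolding Q_def by simp
      then have "pt y \<le> q" unfolding q_def using finQ by (intro Max_ge) auto
      then show False using yy qt by simp
    qed
    have zR: "z \<in> R b 0 t" unfolding z_def R_def using r0 t unfolding r_def by simp
    have e1: "\<Psi>o \<omega> \<inter> R b 0 t = {z}"
    proof (intro equalityI subsetI)
      fix y assume "y \<in> \<Psi>o \<omega> \<inter> R b 0 t"
      then show "y \<in> {z}" using no_o unfolding Lo_def by auto
    qed (use zR x z_def in auto)
    have e2: "\<Psi>o \<omega> \<inter> R (\<not> b) 0 (g1 t) = {}"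
    proof (rule ccontr)
      assume "\<Psi>o \<omega> \<inter> R (\<not> b) 0 (g1 t) \<noteq> {}"
      then obtain y where y: "y \<in> \<Psi>o \<omega>" "y \<in> R (\<not> b) 0 (g1 t)" by auto
      then have "y = z" using no_o unfolding Lo_def by auto
      then show False using y unfolding z_def R_def by auto
    qed
    have e3: "\<Psi>t \<omega> \<inter> R True 0 (g2 t) = {}" "\<Psi>t \<omega> \<inter> R False 0 (g3 t) = {}"
      using no_t unfolding Lt_def by auto
    have "R b 0 0 = {}" unfolding R_def by auto
    then have "\<omega> \<in> F 0 t" unfolding F_def using w e1 e2 e3 by (simp add: cnt_def)
    then show ?thesis using t t0 by blast
  qed
qed

lemma E_sets: "E \<in> sets M"
proof -
  have "E = (\<Union>t\<in>{t\<in>\<rat>. 0 < t}. F 0 t) \<union> Z0"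
  proof (rule equalityI[OF E_sub_union])
    show "(\<Union>t\<in>{t\<in>\<rat>. 0 < t}. F 0 t) \<union> Z0 \<subseteq> E"
      using F_sub_E[of 0] Z0_sub_E by auto
  qed
  also have "\<dots> \<in> sets M"
  proof (intro sets.Un sets.countable_UN' Z0_sets)
    show "countable {t\<in>\<rat>. 0 < t}" by (rule countable_subset[OF _ countable_rat]) auto
    show "(\<lambda>t. F 0 t) ` {t\<in>\<rat>. 0 < t} \<subseteq> sets M" using F_sets[of 0] by auto
  qed
  finally show ?thesis .
qed

end




context tier begin

lemma W_sum: assumes m: "0 \<le> m" shows "W lam q True m + W lam q False m = lam * pi * m\<^sup>2"
proof -
  have i1: "set_integrable lborel {0..m} (wq lam q True)" by (rule wq_set_integrable) simp
  have i2: "set_integrable lborel {0..m} (wq lam q False)" by (rule wq_set_integrable) simp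
  have "W lam q True m + W lam q False m = (LINT u:{0..m}|lborel. wq lam q True u + wq lam q False u)"
    unfolding W_def by (rule set_integral_add(2)[OF i1 i2, symmetric])
  also have "\<dots> = (LINT u:{0..m}|lborel. lam * (2 * pi * u))"
    by (rule set_lebesgue_integral_cong) (auto simp: wq_def algebra_simps)
  also have "\<dots> = integral {0..m} (\<lambda>u. lam * (2 * pi * u))"
  proof (rule set_borel_integral_eq_integral)
    show "set_integrable lborel {0..m} (\<lambda>u. lam * (2 * pi * u))"
    proof (rule set_int_bounded[where B="lam * (2 * pi * m)"])
      fix u assume u: "0 \<le> u" "u \<le> m"
      have "lam * (2 * pi * u) \<le> lam * (2 * pi * m)" using u lam by (intro mult_left_mono) auto
      moreover have "0 \<le> lam * (2 * pi * u)" using u lam by simp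
      ultimately show "\<bar>lam * (2 * pi * u)\<bar> \<le> lam * (2 * pi * m)" by simp
    qed simp
  qed
  also have "\<dots> = lam * pi * m\<^sup>2"
  proof (rule integral_unique)
    have "((\<lambda>u. lam * (2 * pi * u)) has_integral (lam * pi * m\<^sup>2 - lam * pi * 0\<^sup>2)) {0..m}"
      by (rule fundamental_theorem_of_calculus) (use m in \<open>auto intro!: derivative_eq_intros simp: power2_eq_square\<close>)
    then show "((\<lambda>u. lam * (2 * pi * u)) has_integral (lam * pi * m\<^sup>2)) {0..m}" by simp
  qed
  finally show ?thesis .
qed

end

lemma powr_unbounded:
  fixes C e :: real assumes C: "0 < C" and e: "0 < e"
  shows "\<exists>N0::nat. \<forall>N\<ge>N0. Z \<le> C * real N powr e"
proof -
  define B where "B = max 1 (Z / C)"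
  have B1: "1 \<le> B" unfolding B_def by simp
  obtain N0 :: nat where N0: "B powr (1 / e) \<le> real N0" using real_arch_simple by blast
  show ?thesis
  proof (intro exI[of _ N0] allI impI)
    fix N :: nat assume "N0 \<le> N"
    then have "B powr (1 / e) \<le> real N" using N0 by linarith
    then have "(B powr (1 / e)) powr e \<le> real N powr e" using e B1 by (intro powr_mono2) auto
    then have "B \<le> real N powr e" using e B1 by (simp add: powr_powr)
    then have "C * B \<le> C * real N powr e" using C by simp
    moreover have "Z \<le> C * B" using C unfolding B_def by (simp add: field_simps max_def)
    ultimately show "Z \<le> C * real N powr e" by linarith
  qed
qed

context scen begin

lemma Mf_mono: "0 \<le> x \<Longrightarrow> x \<le> y \<Longrightarrow> Mf x \<le> Mf y"
  unfolding Mf_def using To.W_mono Tt.W_mono g_mono g_nonneg by (intro add_mono) auto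

lemma Mf_zero: "Mf 0 = 0"
  unfolding Mf_def by (simp add: W_zero g_zero)

lemma Mf_inf: "filterlim (\<lambda>N::nat. Mf (real N)) at_top sequentially"
  unfolding filterlim_at_top
proof
  fix Z :: real
  define Z' where "Z' = max 1 (Z / (lo * pi))"
  obtain N1 :: nat where N1: "\<forall>N\<ge>N1. Z' \<le> (c1 / c0) powr (1 / a1) * real N powr (a0 / a1)"
    using powr_unbounded[of "(c1 / c0) powr (1 / a1)" "a0 / a1" Z'] cpos by auto
  obtain N2 :: nat where N2: "Z' \<le> real N2" using real_arch_simple by blast
  show "\<forall>\<^sub>F N in sequentially. Z \<le> Mf (real N)"
    unfolding eventually_sequentially
  proof (intro exI[of _ "max N1 N2"] allI impI)
    fix N assume N: "max N1 N2 \<le> N"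
    define m where "m = min (real N) (g1 (real N))"
    have m0: "0 \<le> m" unfolding m_def using g_nonneg by simp
    have mZ: "Z' \<le> m"
    proof -
      have "Z' \<le> real N" using N N2 by linarith
      moreover have "Z' \<le> g1 (real N)" using N1 N unfolding g1_def gf_def by auto
      ultimately show ?thesis unfolding m_def by simp
    qed
    have Z1: "1 \<le> Z'" unfolding Z'_def by simp
    have "Z \<le> lo * pi * Z'" using lo_pos unfolding Z'_def by (simp add: field_simps max_def)
    also have "\<dots> \<le> lo * pi * Z'\<^sup>2" using lo_pos Z1 by (simp add: power2_eq_square)
    also have "\<dots> \<le> lo * pi * m\<^sup>2" using lo_pos Z1 mZ by (intro mult_left_mono power_mono) auto
    also have "\<dots> = W0 m + W1 m" using To.W_sum[OF m0] by (cases b) (simp_all add: add.commute)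
    also have "\<dots> \<le> W0 (real N) + W1 (g1 (real N))"
      using To.W_mono m0 unfolding m_def by (intro add_mono) auto
    also have "\<dots> \<le> Mf (real N)" unfolding Mf_def using Tt.W_nonneg by simp
    finally show "Z \<le> Mf (real N)" .
  qed
qed

end




context scen begin

lemma F_disj: assumes "0 \<le> s" "s < t" "t \<le> s'" shows "F s t \<inter> F s' t' = {}"
proof (rule ccontr)
  assume "F s t \<inter> F s' t' \<noteq> {}"
  then obtain \<omega> where w1: "\<omega> \<in> F s t" and w2: "\<omega> \<in> F s' t'" by auto
  then have sp: "\<omega> \<in> space M" unfolding F_def by simp
  from w1 obtain z where z: "\<Psi>o \<omega> \<inter> R b s t = {z}" unfolding F_def cnt1_o by auto
  have e: "\<Psi>o \<omega> \<inter> R b 0 s' = {}" using w2 sp unfolding F_def by (auto simp: cnt0_o)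
  have zR: "z \<in> R b s t" "z \<in> \<Psi>o \<omega>" using z by blast+
  have "z \<in> R b 0 s'" using zR(1) assms unfolding R_def by auto
  then show False using zR(2) e by blast
qed

lemma Zr_mono: "Zr s t \<subseteq> Zr s s"
proof
  fix \<omega> assume "\<omega> \<in> Zr s t"
  moreover have "R b s s = {}" unfolding R_def by auto
  ultimately show "\<omega> \<in> Zr s s" unfolding Zr_def by (simp add: cnt_def)
qed

lemma low_bound:
  assumes T: "0 < T" and n: "0 < n"
  shows "(\<Sum>j<n. (W0 (real (Suc j) * T / real n) - W0 (real j * T / real n)) * exp (- Mf (real (Suc j) * T / real n))) \<le> measure M E"
proof -
  interpret prob_space M by (rule psp)
  define \<tau> where "\<tau> j = real j * T / real n" for j :: nat
  have \<tau>0: "0 \<le> \<tau> j" for j unfolding \<tau>_def using T by simp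
  have \<tau>m: "j \<le> k \<Longrightarrow> \<tau> j \<le> \<tau> k" for j k unfolding \<tau>_def using T n by (simp add: divide_right_mono)
  have \<tau>s: "\<tau> j < \<tau> (Suc j)" for j unfolding \<tau>_def using T n by (simp add: divide_strict_right_mono)
  have "(\<Sum>j<n. (W0 (\<tau> (Suc j)) - W0 (\<tau> j)) * exp (- Mf (\<tau> (Suc j)))) = (\<Sum>j<n. measure M (F (\<tau> j) (\<tau> (Suc j))))"
    by (rule sum.cong) (use prob_F \<tau>0 \<tau>s in \<open>auto simp: less_imp_le\<close>)
  also have "\<dots> = measure M (\<Union>j<n. F (\<tau> j) (\<tau> (Suc j)))"
  proof (rule measure_finite_Union[symmetric])
    show "(\<lambda>j. F (\<tau> j) (\<tau> (Suc j))) ` {..<n} \<subseteq> sets M" using F_sets \<tau>0 by auto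
    show "disjoint_family_on (\<lambda>j. F (\<tau> j) (\<tau> (Suc j))) {..<n}"
      unfolding disjoint_family_on_def
    proof (intro ballI impI)
      fix j k assume "j \<in> {..<n}" "k \<in> {..<n}" "j \<noteq> k"
      then consider "j < k" | "k < j" by linarith
      then show "F (\<tau> j) (\<tau> (Suc j)) \<inter> F (\<tau> k) (\<tau> (Suc k)) = {}"
      proof cases
        case 1 then show ?thesis using F_disj[OF \<tau>0 \<tau>s \<tau>m[of "Suc j" k]] by simp
      next
        case 2 then show ?thesis using F_disj[OF \<tau>0 \<tau>s \<tau>m[of "Suc k" j]] by (simp add: Int_commute)
      qed
    qed
  qed (auto simp: emeasure_eq_measure)
  also have "\<dots> \<le> measure M E"
    by (rule finite_measure_mono[OF _ E_sets]) (use F_sub_E \<tau>0 \<tau>s in blast)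
  finally show ?thesis unfolding \<tau>_def .
qed

lemma upp_bound:
  assumes T: "0 < T" and n: "0 < n"
  shows "measure M E \<le> (\<Sum>j<n. exp (- Mf (real j * T / real n)) * (W0 (real (Suc j) * T / real n) - W0 (real j * T / real n))) + exp (- Mf T)"
proof -
  interpret prob_space M by (rule psp)
  define \<tau> where "\<tau> j = real j * T / real n" for j :: nat
  have \<tau>0: "0 \<le> \<tau> j" for j unfolding \<tau>_def using T by simp
  have \<tau>s: "\<tau> j \<le> \<tau> (Suc j)" for j unfolding \<tau>_def using T n by (simp add: divide_right_mono)
  define U where "U j = Zr (\<tau> j) (\<tau> j) - Zr (\<tau> j) (\<tau> (Suc j))" for j
  have Us: "U j \<in> sets M" for j unfolding U_def using Zr_sets \<tau>0 by auto
  have ZT: "Zr T T \<in> sets M" using Zr_sets T by simp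
  have "measure M E \<le> measure M ((\<Union>j<n. U j) \<union> Zr T T)"
    by (rule finite_measure_mono) (use E_cover[OF T n] Us ZT in \<open>auto simp: U_def \<tau>_def\<close>)
  also have "\<dots> \<le> measure M (\<Union>j<n. U j) + measure M (Zr T T)"
    by (rule measure_Un_le) (use Us ZT in auto)
  also have "\<dots> \<le> (\<Sum>j<n. measure M (U j)) + measure M (Zr T T)"
    using measure_UNION_le[of "{..<n}" U M] Us by simp
  also have "\<dots> \<le> (\<Sum>j<n. exp (- Mf (\<tau> j)) * (W0 (\<tau> (Suc j)) - W0 (\<tau> j))) + exp (- Mf T)"
  proof (intro add_mono sum_mono)
    show "measure M (Zr T T) \<le> exp (- Mf T)" using prob_Z T by simp
    fix j
    have "measure M (U j) = measure M (Zr (\<tau> j) (\<tau> j)) - measure M (Zr (\<tau> j) (\<tau> (Suc j)))"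
      unfolding U_def by (rule measure_Diff) (use Zr_sets \<tau>0 Zr_mono in \<open>auto simp: emeasure_eq_measure\<close>)
    also have "\<dots> = exp (- Mf (\<tau> j)) - exp (- (Mf (\<tau> j) + (W0 (\<tau> (Suc j)) - W0 (\<tau> j))))"
      using prob_Z[OF \<tau>0] prob_Zr[OF \<tau>0 \<tau>s] unfolding Mf_def by (simp add: algebra_simps)
    also have "\<dots> = exp (- Mf (\<tau> j)) * (1 - exp (- (W0 (\<tau> (Suc j)) - W0 (\<tau> j))))"
      by (simp add: exp_add[symmetric] algebra_simps exp_diff minus_add_distrib)
    also have "\<dots> \<le> exp (- Mf (\<tau> j)) * (W0 (\<tau> (Suc j)) - W0 (\<tau> j))"
    proof (rule mult_left_mono)
      show "1 - exp (- (W0 (\<tau> (Suc j)) - W0 (\<tau> j))) \<le> W0 (\<tau> (Suc j)) - W0 (\<tau> j)"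
        using exp_ge_add_one_self[of "W0 (\<tau> j) - W0 (\<tau> (Suc j))"] by (simp only: minus_diff_eq)
    qed simp
    finally show "measure M (U j) \<le> exp (- Mf (\<tau> j)) * (W0 (\<tau> (Suc j)) - W0 (\<tau> j))" .
  qed
  finally show ?thesis unfolding \<tau>_def .
qed

theorem main: "measure M E = (LINT r:{0<..}|lborel. wq lo qo b r * exp (- Mf r))"
proof (rule analytic[where K="lo * 2 * pi"])
  show "wq lo qo b \<in> borel_measurable borel" by (rule To.wq_meas)
  show "\<And>u. 0 \<le> u \<Longrightarrow> 0 \<le> wq lo qo b u" by (rule To.wq_nonneg)
  show "\<And>u. 0 \<le> u \<Longrightarrow> wq lo qo b u \<le> lo * 2 * pi * u" using To.wq_le by (simp add: mult_ac)
  show "0 \<le> lo * 2 * pi" using lo_pos by simp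
  show "\<And>x y. 0 \<le> x \<Longrightarrow> x \<le> y \<Longrightarrow> Mf x \<le> Mf y" by (rule Mf_mono)
  show "Mf 0 = 0" by (rule Mf_zero)
  show "filterlim (\<lambda>N::nat. Mf (real N)) at_top sequentially" by (rule Mf_inf)
  show "\<And>T n. 0 < T \<Longrightarrow> 0 < n \<Longrightarrow> (\<Sum>j<n. ((LINT u:{0..real (Suc j) * T / real n}|lborel. wq lo qo b u) - (LINT u:{0..real j * T / real n}|lborel. wq lo qo b u))
                * exp (- Mf (real (Suc j) * T / real n))) \<le> measure M E"
    using low_bound unfolding W_def by blast
  show "\<And>T n. 0 < T \<Longrightarrow> 0 < n \<Longrightarrow> measure M E \<le> (\<Sum>j<n. exp (- Mf (real j * T / real n)) *
              ((LINT u:{0..real (Suc j) * T / real n}|lborel. wq lo qo b u) - (LINT u:{0..real j * T / real n}|lborel. wq lo qo b u)))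
            + exp (- Mf T)"
    using upp_bound unfolding W_def by blast
qed

end




lemma exp_split4: "exp (- (a + b + c + d)) = exp (- a - b) * exp (- c - (d::real))"
  by (simp add: exp_add[symmetric])

lemma exp_split4': "exp (- (a + b + c + d)) = exp (- b - a) * exp (- c - (d::real))"
  by (simp add: exp_add[symmetric])

theorem theorem1:
  fixes M :: "'a measure"
    and \<Psi>m \<Psi>s :: "'a \<Rightarrow> (pt \<times> bool) set"
    and lm ls Pm Ps B LL LNL aL aNL :: real
    and pmL psL :: "real \<Rightarrow> real"
  assumes lm: "lm > 0" and ls: "ls > 0"
    and Pm: "Pm > 0" and Ps: "Ps > 0" and B: "B > 0"
    and LL: "LL > 0" and LNL: "LNL > 0" and aL: "aL > 0" and aNL: "aNL > 0"
    and pmL_meas: "pmL \<in> borel_measurable borel" and psL_meas: "psL \<in> borel_measurable borel"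
    and pmL_range: "\<And>r. r \<ge> 0 \<Longrightarrow> 0 \<le> pmL r \<and> pmL r \<le> 1"
    and psL_range: "\<And>r. r \<ge> 0 \<Longrightarrow> 0 \<le> psL r \<and> psL r \<le> 1"
    and model: "two_tier_marked_ppp M \<Psi>m (marked_intensity lm pmL) \<Psi>s (marked_intensity ls psL)"
  defines "powm \<equiv> rx_power Pm LL LNL aL aNL"
    and "pows \<equiv> rx_power (B * Ps) LL LNL aL aNL"
    and "k1 \<equiv> (LNL / LL) powr (1 / aNL)"
    and "k2 \<equiv> (B * Ps / Pm) powr (1 / aL)"
    and "k3 \<equiv> (B * Ps / Pm) powr (1 / aNL)"
    and "k4 \<equiv> (LL / LNL) powr (1 / aL)"
    and "\<zeta>1 \<equiv> zeta lm pmL"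
    and "\<zeta>2 \<equiv> zeta ls psL"
  shows
    "measure M (serving_event M \<Psi>m powm \<Psi>s pows True) =
       2 * pi * lm * (LINT r:{0<..}|lborel.
          r * pmL r * \<zeta>1 r (k1 * r powr (aL / aNL)) * \<zeta>2 (k2 * r) (k1 * k3 * r powr (aL / aNL))) \<and>
    measure M (serving_event M \<Psi>m powm \<Psi>s pows False) =
       2 * pi * lm * (LINT r:{0<..}|lborel.
          r * (1 - pmL r) * \<zeta>1 (k4 * r powr (aNL / aL)) r * \<zeta>2 (k2 * k4 * r powr (aNL / aL)) (k3 * r)) \<and>
    measure M (serving_event M \<Psi>s pows \<Psi>m powm True) =
       2 * pi * ls * (LINT r:{0<..}|lborel.
          r * psL r * \<zeta>1 (r / k2) ((k1 / k3) * r powr (aL / aNL)) * \<zeta>2 r (k1 * r powr (aL / aNL))) \<and>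
    measure M (serving_event M \<Psi>s pows \<Psi>m powm False) =
       2 * pi * ls * (LINT r:{0<..}|lborel.
          r * (1 - psL r) * \<zeta>1 ((k4 / k2) * r powr (aNL / aL)) (r / k3) * \<zeta>2 (k4 * r powr (aNL / aL)) r)"
proof -
  have tm: "tier lm pmL" by unfold_locales (use lm pmL_meas pmL_range in auto)
  have ts: "tier ls psL" by unfold_locales (use ls psL_meas psL_range in auto)
  have BP: "0 < B * Ps" using B Ps by simp
  have e1: "(Pm * LNL / (Pm * LL)) powr (1 / aNL) = k1" unfolding k1_def using Pm by simp
  have e2: "(B * Ps * LL / (Pm * LL)) powr (1 / aL) = k2" unfolding k2_def using LL by simp
  have e3: "(B * Ps * LNL / (Pm * LL)) powr (1 / aNL) = k1 * k3"
  proof -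
    have "B * Ps * LNL / (Pm * LL) = (LNL / LL) * (B * Ps / Pm)" using Pm Ps B LL LNL by (simp add: field_simps)
    then show ?thesis unfolding k1_def k3_def by (simp only: powr_mult)
  qed
  have e4: "(Pm * LL / (Pm * LNL)) powr (1 / aL) = k4" unfolding k4_def using Pm by simp
  have e5: "(B * Ps * LL / (Pm * LNL)) powr (1 / aL) = k2 * k4"
  proof -
    have "B * Ps * LL / (Pm * LNL) = (B * Ps / Pm) * (LL / LNL)" using Pm Ps B LL LNL by (simp add: field_simps)
    then show ?thesis unfolding k2_def k4_def by (simp only: powr_mult)
  qed
  have e6: "(B * Ps * LNL / (Pm * LNL)) powr (1 / aNL) = k3" unfolding k3_def using LNL by simp
  have e7: "(B * Ps * LNL / (B * Ps * LL)) powr (1 / aNL) = k1" unfolding k1_def using B Ps LL LNL by simp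
  have e8: "(Pm * LL / (B * Ps * LL)) powr (1 / aL) = 1 / k2"
  proof -
    have "Pm * LL / (B * Ps * LL) = 1 / (B * Ps / Pm)" using Pm Ps B LL LNL by (simp add: field_simps)
    then show ?thesis unfolding k2_def by (simp only: powr_divide) simp
  qed
  have e9: "(Pm * LNL / (B * Ps * LL)) powr (1 / aNL) = k1 / k3"
  proof -
    have "Pm * LNL / (B * Ps * LL) = (LNL / LL) / (B * Ps / Pm)" using Pm Ps B LL LNL by (simp add: field_simps)
    then show ?thesis unfolding k1_def k3_def by (simp only: powr_divide)
  qed
  have e10: "(B * Ps * LL / (B * Ps * LNL)) powr (1 / aL) = k4" unfolding k4_def using B Ps LL LNL by simp
  have e11: "(Pm * LL / (B * Ps * LNL)) powr (1 / aL) = k4 / k2"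
  proof -
    have "Pm * LL / (B * Ps * LNL) = (LL / LNL) / (B * Ps / Pm)" using Pm Ps B LL LNL by (simp add: field_simps)
    then show ?thesis unfolding k4_def k2_def by (simp only: powr_divide)
  qed
  have e12: "(Pm * LNL / (B * Ps * LNL)) powr (1 / aNL) = 1 / k3"
  proof -
    have "Pm * LNL / (B * Ps * LNL) = 1 / (B * Ps / Pm)" using Pm Ps B LL LNL by (simp add: field_simps)
    then show ?thesis unfolding k3_def by (simp only: powr_divide) simp
  qed
  have r1: "r powr (a / a) = r" if "0 < r" "0 < a" for r a :: real using that by simp
  have C1: "measure M (serving_event M \<Psi>m powm \<Psi>s pows True) = 2 * pi * lm * (LINT r:{0<..}|lborel. r * pmL r * \<zeta>1 r (k1 * r powr (aL / aNL)) * \<zeta>2 (k2 * r) (k1 * k3 * r powr (aL / aNL)))"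
  proof -
    interpret S: scen M \<Psi>m \<Psi>s lm pmL ls psL True "Pm * LL" aL "Pm * LNL" aNL "B * Ps * LL" aL "B * Ps * LNL" aNL
      by (rule scen.intro) (use model tm ts lm ls Pm Ps B LL LNL aL aNL in auto)
    have po: "S.po = powm" by (auto simp: fun_eq_iff S.po_def powm_def rx_power_def)
    have pt: "S.pt = pows" by (auto simp: fun_eq_iff S.pt_def pows_def rx_power_def)
    have "measure M (serving_event M \<Psi>m powm \<Psi>s pows True) = (LINT r:{0<..}|lborel. wq lm pmL True r * exp (- S.Mf r))"
      using S.main unfolding S.E_def po pt .
    also have "\<dots> = (LINT r:{0<..}|lborel. 2 * pi * lm * (r * pmL r * \<zeta>1 r (k1 * r powr (aL / aNL)) * \<zeta>2 (k2 * r) (k1 * k3 * r powr (aL / aNL))))"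
    proof (rule set_lebesgue_integral_cong)
      show "{0::real<..} \<in> sets lborel" by simp
      show "\<forall>r. r \<in> {0<..} \<longrightarrow> wq lm pmL True r * exp (- S.Mf r) = 2 * pi * lm * (r * pmL r * \<zeta>1 r (k1 * r powr (aL / aNL)) * \<zeta>2 (k2 * r) (k1 * k3 * r powr (aL / aNL)))"
      proof (intro allI impI)
        fix r :: real assume "r \<in> {0<..}"
        then have r: "0 < r" by simp
        have g: "S.g1 r = k1 * r powr (aL / aNL)" "S.g2 r = k2 * r" "S.g3 r = k1 * k3 * r powr (aL / aNL)"
          unfolding S.g1_def S.g2_def S.g3_def gf_def using e1 e2 e3 e4 e5 e6 e7 e8 e9 e10 e11 e12 r aL aNL by auto
        show "wq lm pmL True r * exp (- S.Mf r) = 2 * pi * lm * (r * pmL r * \<zeta>1 r (k1 * r powr (aL / aNL)) * \<zeta>2 (k2 * r) (k1 * k3 * r powr (aL / aNL)))"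
          unfolding S.Mf_def exp_split4 \<zeta>1_def \<zeta>2_def zeta_W wq_def g by (simp add: mult_ac)
      qed
    qed
    also have "\<dots> = 2 * pi * lm * (LINT r:{0<..}|lborel. r * pmL r * \<zeta>1 r (k1 * r powr (aL / aNL)) * \<zeta>2 (k2 * r) (k1 * k3 * r powr (aL / aNL)))"
      by (rule set_integral_mult_right)
    finally show ?thesis .
  qed
  have C2: "measure M (serving_event M \<Psi>m powm \<Psi>s pows False) = 2 * pi * lm * (LINT r:{0<..}|lborel. r * (1 - pmL r) * \<zeta>1 (k4 * r powr (aNL / aL)) r * \<zeta>2 (k2 * k4 * r powr (aNL / aL)) (k3 * r))"
  proof -
    interpret S: scen M \<Psi>m \<Psi>s lm pmL ls psL False "Pm * LNL" aNL "Pm * LL" aL "B * Ps * LL" aL "B * Ps * LNL" aNL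
      by (rule scen.intro) (use model tm ts lm ls Pm Ps B LL LNL aL aNL in auto)
    have po: "S.po = powm" by (auto simp: fun_eq_iff S.po_def powm_def rx_power_def)
    have pt: "S.pt = pows" by (auto simp: fun_eq_iff S.pt_def pows_def rx_power_def)
    have "measure M (serving_event M \<Psi>m powm \<Psi>s pows False) = (LINT r:{0<..}|lborel. wq lm pmL False r * exp (- S.Mf r))"
      using S.main unfolding S.E_def po pt .
    also have "\<dots> = (LINT r:{0<..}|lborel. 2 * pi * lm * (r * (1 - pmL r) * \<zeta>1 (k4 * r powr (aNL / aL)) r * \<zeta>2 (k2 * k4 * r powr (aNL / aL)) (k3 * r)))"
    proof (rule set_lebesgue_integral_cong)
      show "{0::real<..} \<in> sets lborel" by simp
      show "\<forall>r. r \<in> {0<..} \<longrightarrow> wq lm pmL False r * exp (- S.Mf r) = 2 * pi * lm * (r * (1 - pmL r) * \<zeta>1 (k4 * r powr (aNL / aL)) r * \<zeta>2 (k2 * k4 * r powr (aNL / aL)) (k3 * r))"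
      proof (intro allI impI)
        fix r :: real assume "r \<in> {0<..}"
        then have r: "0 < r" by simp
        have g: "S.g1 r = k4 * r powr (aNL / aL)" "S.g2 r = k2 * k4 * r powr (aNL / aL)" "S.g3 r = k3 * r"
          unfolding S.g1_def S.g2_def S.g3_def gf_def using e1 e2 e3 e4 e5 e6 e7 e8 e9 e10 e11 e12 r aL aNL by auto
        show "wq lm pmL False r * exp (- S.Mf r) = 2 * pi * lm * (r * (1 - pmL r) * \<zeta>1 (k4 * r powr (aNL / aL)) r * \<zeta>2 (k2 * k4 * r powr (aNL / aL)) (k3 * r))"
          unfolding S.Mf_def exp_split4' \<zeta>1_def \<zeta>2_def zeta_W wq_def g by (simp add: mult_ac)
      qed
    qed
    also have "\<dots> = 2 * pi * lm * (LINT r:{0<..}|lborel. r * (1 - pmL r) * \<zeta>1 (k4 * r powr (aNL / aL)) r * \<zeta>2 (k2 * k4 * r powr (aNL / aL)) (k3 * r))"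
      by (rule set_integral_mult_right)
    finally show ?thesis .
  qed
  have C3: "measure M (serving_event M \<Psi>s pows \<Psi>m powm True) = 2 * pi * ls * (LINT r:{0<..}|lborel. r * psL r * \<zeta>1 (r / k2) ((k1 / k3) * r powr (aL / aNL)) * \<zeta>2 r (k1 * r powr (aL / aNL)))"
  proof -
    interpret S: scen M \<Psi>s \<Psi>m ls psL lm pmL True "B * Ps * LL" aL "B * Ps * LNL" aNL "Pm * LL" aL "Pm * LNL" aNL
      by (rule scen.intro) (use model tm ts lm ls Pm Ps B LL LNL aL aNL in auto)
    have po: "S.po = pows" by (auto simp: fun_eq_iff S.po_def pows_def rx_power_def)
    have pt: "S.pt = powm" by (auto simp: fun_eq_iff S.pt_def powm_def rx_power_def)
    have "measure M (serving_event M \<Psi>s pows \<Psi>m powm True) = (LINT r:{0<..}|lborel. wq ls psL True r * exp (- S.Mf r))"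
      using S.main unfolding S.E_def po pt .
    also have "\<dots> = (LINT r:{0<..}|lborel. 2 * pi * ls * (r * psL r * \<zeta>1 (r / k2) ((k1 / k3) * r powr (aL / aNL)) * \<zeta>2 r (k1 * r powr (aL / aNL))))"
    proof (rule set_lebesgue_integral_cong)
      show "{0::real<..} \<in> sets lborel" by simp
      show "\<forall>r. r \<in> {0<..} \<longrightarrow> wq ls psL True r * exp (- S.Mf r) = 2 * pi * ls * (r * psL r * \<zeta>1 (r / k2) ((k1 / k3) * r powr (aL / aNL)) * \<zeta>2 r (k1 * r powr (aL / aNL)))"
      proof (intro allI impI)
        fix r :: real assume "r \<in> {0<..}"
        then have r: "0 < r" by simp
        have g: "S.g1 r = k1 * r powr (aL / aNL)" "S.g2 r = r / k2" "S.g3 r = (k1 / k3) * r powr (aL / aNL)"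
          unfolding S.g1_def S.g2_def S.g3_def gf_def using e1 e2 e3 e4 e5 e6 e7 e8 e9 e10 e11 e12 r aL aNL by auto
        show "wq ls psL True r * exp (- S.Mf r) = 2 * pi * ls * (r * psL r * \<zeta>1 (r / k2) ((k1 / k3) * r powr (aL / aNL)) * \<zeta>2 r (k1 * r powr (aL / aNL)))"
          unfolding S.Mf_def exp_split4 \<zeta>1_def \<zeta>2_def zeta_W wq_def g by (simp add: mult_ac)
      qed
    qed
    also have "\<dots> = 2 * pi * ls * (LINT r:{0<..}|lborel. r * psL r * \<zeta>1 (r / k2) ((k1 / k3) * r powr (aL / aNL)) * \<zeta>2 r (k1 * r powr (aL / aNL)))"
      by (rule set_integral_mult_right)
    finally show ?thesis .
  qed
  have C4: "measure M (serving_event M \<Psi>s pows \<Psi>m powm False) = 2 * pi * ls * (LINT r:{0<..}|lborel. r * (1 - psL r) * \<zeta>1 ((k4 / k2) * r powr (aNL / aL)) (r / k3) * \<zeta>2 (k4 * r powr (aNL / aL)) r)"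
  proof -
    interpret S: scen M \<Psi>s \<Psi>m ls psL lm pmL False "B * Ps * LNL" aNL "B * Ps * LL" aL "Pm * LL" aL "Pm * LNL" aNL
      by (rule scen.intro) (use model tm ts lm ls Pm Ps B LL LNL aL aNL in auto)
    have po: "S.po = pows" by (auto simp: fun_eq_iff S.po_def pows_def rx_power_def)
    have pt: "S.pt = powm" by (auto simp: fun_eq_iff S.pt_def powm_def rx_power_def)
    have "measure M (serving_event M \<Psi>s pows \<Psi>m powm False) = (LINT r:{0<..}|lborel. wq ls psL False r * exp (- S.Mf r))"
      using S.main unfolding S.E_def po pt .
    also have "\<dots> = (LINT r:{0<..}|lborel. 2 * pi * ls * (r * (1 - psL r) * \<zeta>1 ((k4 / k2) * r powr (aNL / aL)) (r / k3) * \<zeta>2 (k4 * r powr (aNL / aL)) r))"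
    proof (rule set_lebesgue_integral_cong)
      show "{0::real<..} \<in> sets lborel" by simp
      show "\<forall>r. r \<in> {0<..} \<longrightarrow> wq ls psL False r * exp (- S.Mf r) = 2 * pi * ls * (r * (1 - psL r) * \<zeta>1 ((k4 / k2) * r powr (aNL / aL)) (r / k3) * \<zeta>2 (k4 * r powr (aNL / aL)) r)"
      proof (intro allI impI)
        fix r :: real assume "r \<in> {0<..}"
        then have r: "0 < r" by simp
        have g: "S.g1 r = k4 * r powr (aNL / aL)" "S.g2 r = (k4 / k2) * r powr (aNL / aL)" "S.g3 r = r / k3"
          unfolding S.g1_def S.g2_def S.g3_def gf_def using e1 e2 e3 e4 e5 e6 e7 e8 e9 e10 e11 e12 r aL aNL by auto
        show "wq ls psL False r * exp (- S.Mf r) = 2 * pi * ls * (r * (1 - psL r) * \<zeta>1 ((k4 / k2) * r powr (aNL / aL)) (r / k3) * \<zeta>2 (k4 * r powr (aNL / aL)) r)"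
          unfolding S.Mf_def exp_split4' \<zeta>1_def \<zeta>2_def zeta_W wq_def g by (simp add: mult_ac)
      qed
    qed
    also have "\<dots> = 2 * pi * ls * (LINT r:{0<..}|lborel. r * (1 - psL r) * \<zeta>1 ((k4 / k2) * r powr (aNL / aL)) (r / k3) * \<zeta>2 (k4 * r powr (aNL / aL)) r)"
      by (rule set_integral_mult_right)
    finally show ?thesis .
  qed
  show ?thesis using C1 C2 C3 C4 by blast
qed


end
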